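(* Let $G$ be a finite simple graph with $V(G)=\{1,\dots,n\}$, edge weight function $w$ and vertex weight function $w_1$. Let $\Gamma(c)$ be the set of all nonempty subgraphs of $G$ that are disjoint unions of cycles (each of length at least $3$). Then $$\phi_{(w,w_1)}(G,x)=\eta_{(w,w_1)}(G,x)+\sum_{C\in\Gamma(c)}(-1)^{\mathrm{comp}(C)}w_2(C)\,\eta_{(w,w_1)}(G\setminus C,x).$$ In particular $\phi_{(w,w_1)}(G,x)$ has real coefficients.
   Context: An edge weight function $w$ assigns a nonzero complex number to each edge; a vertex weight function $w_1$ assigns a real number (possibly $0$) to each vertex; subgraphs carry restricted weights. $G\setminus C$ deletes all vertices of $C$ (and incident edges). For $A\subseteq E(G)$, $w(A)=\prod_{e\in A}w(e)$. $\mu_w(G,x)=\sum_{M}(-1)^{|M|}|w(M)|^2x^{n-2|M|}$ over all matchings $M$ (including empty). $\eta_{(w,w_1)}(G,x)=\sum_{S\subseteq V(G)}(-1)^{|V(G)\setminus S|}\big(\prod_{v\in V(G)\setminus S}w_1(v)\big)\mu_w(G[S],x)$ with $G[S]$ the induced subgraph; $\mu_w$ and $\eta_{(w,w_1)}$ of the empty graph are $1$. The weighted adjacency matrix $B=[b_{uv}]$ is the $n\times n$ matrix with $b_{uv}=w(e_{uv})$ if $uv$ is an edge and $u<v$, $b_{uu}=w_1(u)$, $b_{uv}=\overline{w(e_{vu})}$ if $vu$ is an edge and $u>v$, and $b_{uv}=0$ otherwise (so $B$ is Hermitian); $\phi_{(w,w_1)}(G,x)=\det(xI-B)$. For a cycle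 $C=v_1v_2\cdots v_mv_1$ ($m\ge3$), $w_2(C)=b_{v_1v_2}b_{v_2v_3}\cdots b_{v_mv_1}+b_{v_1v_m}b_{v_mv_{m-1}}\cdots b_{v_2v_1}$ (a real number); for a disjoint union $C=C_1\cup\dots\cup C_k$ of cycles, $w_2(C)=\prod_j w_2(C_j)$. $\mathrm{comp}(C)$ is the number of connected components of $C$. *)

theory Defs
  imports "Jordan_Normal_Form.Char_Poly" "HOL-Computational_Algebra.Polynomial"
begin

(* A finite simple graph on vertex set {1..n}: symmetric, irreflexive edge relation E
   whose edges lie in {1..n}.  An edge uv is the 2-set {u,v}. *)
definition simple_graph :: "nat \<Rightarrow> (nat \<Rightarrow> nat \<Rightarrow> bool) \<Rightarrow> bool" where
  "simple_graph n E \<longleftrightarrow>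
     (\<forall>u v. E u v \<longrightarrow> u \<in> {1..n} \<and> v \<in> {1..n} \<and> u \<noteq> v \<and> E v u)"

definition wadj :: "(nat \<Rightarrow> nat \<Rightarrow> bool) \<Rightarrow> (nat set \<Rightarrow> complex) \<Rightarrow> (nat \<Rightarrow> real)
                     \<Rightarrow> nat \<Rightarrow> nat \<Rightarrow> complex" where
  "wadj E w w1 u v =
     (if u = v then complex_of_real (w1 u)
      else if E u v then (if u < v then w {u, v} else cnj (w {u, v}))
      else 0)"

(* The n x n matrix B; row/column index i (0-based) corresponds to vertex i+1. *)
definition wadj_mat :: "nat \<Rightarrow> (nat \<Rightarrow> nat \<Rightarrow> bool) \<Rightarrow> (nat set \<Rightarrow> complex) \<Rightarrow> (nat \<Rightarrow> real)
                         \<Rightarrow> complex mat" where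
  "wadj_mat n E w w1 = mat n n (\<lambda>(i, j). wadj E w w1 (i + 1) (j + 1))"

definition phi :: "nat \<Rightarrow> (nat \<Rightarrow> nat \<Rightarrow> bool) \<Rightarrow> (nat set \<Rightarrow> complex) \<Rightarrow> (nat \<Rightarrow> real)
                    \<Rightarrow> complex poly" where
  "phi n E w w1 = char_poly (wadj_mat n E w w1)"

definition matching :: "(nat \<Rightarrow> nat \<Rightarrow> bool) \<Rightarrow> nat set \<Rightarrow> nat set set \<Rightarrow> bool" where
  "matching E S M \<longleftrightarrow>
     (\<forall>e\<in>M. \<exists>u v. e = {u, v} \<and> u \<in> S \<and> v \<in> S \<and> E u v) \<and>
     (\<forall>e1\<in>M. \<forall>e2\<in>M. e1 \<noteq> e2 \<longrightarrow> e1 \<inter> e2 = {})"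

definition mu :: "(nat \<Rightarrow> nat \<Rightarrow> bool) \<Rightarrow> (nat set \<Rightarrow> complex) \<Rightarrow> nat set \<Rightarrow> real poly" where
  "mu E w S = (\<Sum>M\<in>{M. matching E S M}.
       monom ((-1) ^ card M * (\<Prod>e\<in>M. cmod (w e)) ^ 2) (card S - 2 * card M))"

definition eta :: "(nat \<Rightarrow> nat \<Rightarrow> bool) \<Rightarrow> (nat set \<Rightarrow> complex) \<Rightarrow> (nat \<Rightarrow> real)
                    \<Rightarrow> nat set \<Rightarrow> real poly" where
  "eta E w w1 T = (\<Sum>S\<in>Pow T.
       Polynomial.smult ((-1) ^ card (T - S) * (\<Prod>v\<in>T - S. w1 v)) (mu E w S))"

definition cycle_list :: "(nat \<Rightarrow> nat \<Rightarrow> bool) \<Rightarrow> nat list \<Rightarrow> bool" where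
  "cycle_list E vs \<longleftrightarrow> length vs \<ge> 3 \<and> distinct vs \<and>
     (\<forall>i < length vs. E (vs ! i) (vs ! ((i + 1) mod length vs)))"

definition cycle_edges :: "nat list \<Rightarrow> nat set set" where
  "cycle_edges vs = {{vs ! i, vs ! ((i + 1) mod length vs)} | i. i < length vs}"

definition is_cycle :: "(nat \<Rightarrow> nat \<Rightarrow> bool) \<Rightarrow> nat set set \<Rightarrow> bool" where
  "is_cycle E K \<longleftrightarrow> (\<exists>vs. cycle_list E vs \<and> K = cycle_edges vs)"

(* Gamma(c): nonempty subgraphs (given by their edge sets F, vertex set \<Union>F)
   that are disjoint unions of cycles *)
definition cycle_subgraphs :: "(nat \<Rightarrow> nat \<Rightarrow> bool) \<Rightarrow> nat set set set" where
  "cycle_subgraphs E = {F. \<exists>\<C>. finite \<C> \<and> \<C> \<noteq> {} \<and> (\<forall>K\<in>\<C>. is_cycle E K) \<and>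
       (\<forall>K1\<in>\<C>. \<forall>K2\<in>\<C>. K1 \<noteq> K2 \<longrightarrow> \<Union>K1 \<inter> \<Union>K2 = {}) \<and> F = \<Union>\<C>}"

definition components :: "nat set set \<Rightarrow> nat set set" where
  "components F = {{u. (\<lambda>a b. {a, b} \<in> F)\<^sup>*\<^sup>* v u} | v. v \<in> \<Union>F}"

definition comp :: "nat set set \<Rightarrow> nat" where
  "comp F = card (components F)"

definition w2_list :: "(nat \<Rightarrow> nat \<Rightarrow> complex) \<Rightarrow> nat list \<Rightarrow> complex" where
  "w2_list b vs =
     (\<Prod>i<length vs. b (vs ! i) (vs ! ((i + 1) mod length vs))) +
     (\<Prod>i<length vs. b (vs ! ((i + 1) mod length vs)) (vs ! i))"

(* w_2 of a cycle given by its edge set K (via any traversal of it) *)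
definition w2_cycle :: "(nat \<Rightarrow> nat \<Rightarrow> complex) \<Rightarrow> nat set set \<Rightarrow> complex" where
  "w2_cycle b K = w2_list b (SOME vs. length vs \<ge> 3 \<and> distinct vs \<and> cycle_edges vs = K)"

definition w2 :: "(nat \<Rightarrow> nat \<Rightarrow> bool) \<Rightarrow> (nat set \<Rightarrow> complex) \<Rightarrow> (nat \<Rightarrow> real)
                   \<Rightarrow> nat set set \<Rightarrow> complex" where
  "w2 E w w1 F = (\<Prod>X\<in>components F. w2_cycle (wadj E w w1) {e\<in>F. e \<subseteq> X})"

end

theory Submission
  imports Defs
begin


definition Dg :: "(nat \<Rightarrow> nat \<Rightarrow> 'c::comm_ring_1) \<Rightarrow> nat set \<Rightarrow> 'c" where
  "Dg a W = (\<Sum>p\<in>{p. p permutes W}. of_int (sign p) * (\<Prod>i\<in>W. a i (p i)))"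

definition rowv :: "(nat \<Rightarrow> nat \<Rightarrow> 'c) \<Rightarrow> nat \<Rightarrow> nat \<Rightarrow> nat \<Rightarrow> nat \<Rightarrow> 'c" where
  "rowv a v p = (\<lambda>i j. if i = v then a p j else a i j)"

lemma Dg_cong:
  assumes "\<And>i j. i \<in> W \<Longrightarrow> j \<in> W \<Longrightarrow> a i j = b i j"
  shows "Dg a W = Dg b W"
  unfolding Dg_def
proof (rule sum.cong[OF refl])
  fix p assume "p \<in> {p. p permutes W}"
  then have "p permutes W" by simp
  then have "\<And>i. i \<in> W \<Longrightarrow> p i \<in> W" by (simp add: permutes_in_image)
  then show "of_int (sign p) * (\<Prod>i\<in>W. a i (p i)) = of_int (sign p) * (\<Prod>i\<in>W. b i (p i))"
    using assms by (auto intro!: prod.cong)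
qed

lemma Dg_empty[simp]: "Dg a {} = 1"
  unfolding Dg_def by (simp add: permutes_empty)

lemma L1:
  assumes fin: "finite W" and vW: "v \<in> W"
  shows "Dg a W = a v v * Dg a (W - {v}) - (\<Sum>u\<in>W - {v}. a v u * Dg (rowv a v u) (W - {u}))"
proof -
  let ?f = "\<lambda>p. of_int (sign p) * (\<Prod>i\<in>W. a i (p i))"
  have finP: "finite {p. p permutes W}" using fin by (rule finite_permutations)
  have "Dg a W = (\<Sum>u\<in>W. \<Sum>p\<in>{p \<in> {p. p permutes W}. p v = u}. ?f p)"
    unfolding Dg_def
    by (rule sum.group[symmetric, OF finP fin]) (auto simp: permutes_in_image vW)
  also have "\<dots> = (\<Sum>p\<in>{p \<in> {p. p permutes W}. p v = v}. ?f p) +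
      (\<Sum>u\<in>W - {v}. \<Sum>p\<in>{p \<in> {p. p permutes W}. p v = u}. ?f p)"
    using fin vW by (simp add: sum.remove)
  also have "(\<Sum>p\<in>{p \<in> {p. p permutes W}. p v = v}. ?f p) = a v v * Dg a (W - {v})"
  proof -
    have e: "{p \<in> {p. p permutes W}. p v = v} = {p. p permutes (W - {v})}"
    proof (auto)
      fix p assume "p permutes W" "p v = v"
      then show "p permutes W - {v}" using permutes_superset[of p W "W - {v}"] by auto
    next
      fix p assume "p permutes W - {v}" then show "p permutes W"
        by (rule permutes_subset) auto
    next
      fix p assume "p permutes W - {v}" then show "p v = v"
        by (simp add: permutes_not_in)
    qed
    show ?thesis unfolding e Dg_def sum_distrib_left
    proof (rule sum.cong[OF refl])
      fix p assume "p \<in> {p. p permutes W - {v}}"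
      then have "p v = v" by (simp add: permutes_not_in)
      then show "?f p = a v v * (of_int (sign p) * (\<Prod>i\<in>W - {v}. a i (p i)))"
        using fin vW by (simp add: prod.remove mult_ac)
    qed
  qed
  also have "(\<Sum>u\<in>W - {v}. \<Sum>p\<in>{p \<in> {p. p permutes W}. p v = u}. ?f p) =
      (\<Sum>u\<in>W - {v}. - (a v u * Dg (rowv a v u) (W - {u})))"
  proof (rule sum.cong[OF refl])
    fix u assume u: "u \<in> W - {v}"
    let ?t = "transpose v u"
    have tt: "\<And>q. q \<circ> ?t \<circ> ?t = q" by (simp add: comp_assoc)
    have "(\<Sum>p\<in>{p \<in> {p. p permutes W}. p v = u}. ?f p) =
        (\<Sum>q\<in>{q. q permutes (W - {u})}. ?f (q \<circ> ?t))"
    proof (rule sum.reindex_bij_witness[where i = "\<lambda>p. p \<circ> ?t" and j = "\<lambda>q. q \<circ> ?t"])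
      fix q assume "q \<in> {q. q permutes (W - {u})}"
      then have q: "q permutes W - {u}" by simp
      show "q \<circ> ?t \<circ> ?t = q" by (rule tt)
      have "q permutes W" using q by (rule permutes_subset) auto
      moreover have "?t permutes W" using u vW by (intro permutes_swap_id) auto
      ultimately have "q \<circ> ?t permutes W" by (rule permutes_compose[rotated])
      moreover have "(q \<circ> ?t) v = u" using q by (simp add: permutes_not_in)
      ultimately show "q \<circ> ?t \<in> {p \<in> {p. p permutes W}. p v = u}" by simp
    next
      fix p assume "p \<in> {p \<in> {p. p permutes W}. p v = u}"
      then have p: "p permutes W" "p v = u" by auto
      show "p \<circ> ?t \<circ> ?t = p" by (rule tt)
      have "?t permutes W" using u vW by (intro permutes_swap_id) auto
      then have "p \<circ> ?t permutes W" using p(1) by (rule permutes_compose)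
      then have "p \<circ> ?t permutes W - {u}"
        using permutes_superset[of "p \<circ> ?t" W "W - {u}"] p by auto
      then show "p \<circ> ?t \<in> {q. q permutes (W - {u})}" by simp
    qed (simp only: tt)
    also have "\<dots> = (\<Sum>q\<in>{q. q permutes (W - {u})}. - (a v u * (of_int (sign q) * (\<Prod>i\<in>W - {u}. rowv a v u i (q i)))))"
    proof (rule sum.cong[OF refl])
      fix q assume "q \<in> {q. q permutes (W - {u})}"
      then have q: "q permutes W - {u}" by simp
      have uv: "u \<noteq> v" "u \<in> W" using u by auto
      have pq: "permutation q" using q fin by (meson finite_Diff permutes_imp_permutation)
      have "sign (q \<circ> ?t) = sign q * sign ?t"
        by (rule sign_compose[OF pq]) (simp add: permutation_swap_id)
      also have "\<dots> = - sign q" using uv by (simp add: sign_swap_id)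
      finally have s: "sign (q \<circ> ?t) = - sign q" .
      have qu: "q u = u" using q by (simp add: permutes_not_in)
      have "(\<Prod>i\<in>W. a i ((q \<circ> ?t) i)) = a v ((q \<circ> ?t) v) * (\<Prod>i\<in>W - {v}. a i ((q \<circ> ?t) i))"
        using fin vW by (simp add: prod.remove)
      also have "(\<Prod>i\<in>W - {v}. a i ((q \<circ> ?t) i)) = a u ((q \<circ> ?t) u) * (\<Prod>i\<in>W - {v} - {u}. a i ((q \<circ> ?t) i))"
        using fin u by (simp add: prod.remove)
      also have "(\<Prod>i\<in>W - {v} - {u}. a i ((q \<circ> ?t) i)) = (\<Prod>i\<in>W - {u} - {v}. rowv a v u i (q i))"
        by (rule prod.cong) (auto simp: rowv_def transpose_apply_other)
      finally have h1: "(\<Prod>i\<in>W. a i ((q \<circ> ?t) i)) = a v ((q \<circ> ?t) v) * (a u ((q \<circ> ?t) u) * (\<Prod>i\<in>W - {u} - {v}. rowv a v u i (q i)))" .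
      have h2: "(\<Prod>i\<in>W - {u}. rowv a v u i (q i)) = rowv a v u v (q v) * (\<Prod>i\<in>W - {u} - {v}. rowv a v u i (q i))"
        using fin uv vW by (intro prod.remove) auto
      show "?f (q \<circ> ?t) = - (a v u * (of_int (sign q) * (\<Prod>i\<in>W - {u}. rowv a v u i (q i))))"
        using qu uv h1 h2 by (simp add: s rowv_def mult_ac)
    qed
    also have "\<dots> = - (a v u * Dg (rowv a v u) (W - {u}))"
      unfolding Dg_def by (simp add: sum_negf sum_distrib_left)
    finally show "(\<Sum>p\<in>{p \<in> {p. p permutes W}. p v = u}. ?f p) = - (a v u * Dg (rowv a v u) (W - {u}))" .
  qed
  finally show ?thesis by (simp add: sum_negf)
qed


definition dl :: "nat set \<Rightarrow> nat list set" where
  "dl S = {L. distinct L \<and> set L \<subseteq> S}"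

lemma finite_dl: assumes f: "finite S" shows "finite (dl S)"
proof -
  have "dl S \<subseteq> {xs. set xs \<subseteq> S \<and> length xs \<le> card S}"
  proof
    fix L assume "L \<in> dl S"
    then have L: "distinct L" "set L \<subseteq> S" by (auto simp: dl_def)
    then have "length L \<le> card S" using distinct_card[OF L(1)] card_mono[OF f L(2)] by simp
    then show "L \<in> {xs. set xs \<subseteq> S \<and> length xs \<le> card S}" using L by simp
  qed
  then show ?thesis using finite_lists_length_le[OF f, of "card S"] by (rule finite_subset)
qed

lemma dl_sum:
  assumes f: "finite S"
  shows "(\<Sum>L\<in>dl S. g L) = g [] + (\<Sum>u\<in>S. \<Sum>L\<in>dl (S - {u}). g (u # L))"
proof -
  have e: "dl S = insert [] (\<Union>u\<in>S. (Cons u) ` dl (S - {u}))"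
    apply (auto simp: dl_def)
    subgoal for x by (cases x) auto
    done
  have "(\<Sum>L\<in>dl S. g L) = g [] + (\<Sum>L\<in>(\<Union>u\<in>S. (Cons u) ` dl (S - {u})). g L)"
    unfolding e by (subst sum.insert) (auto intro!: finite_dl f)
  also have "(\<Sum>L\<in>(\<Union>u\<in>S. (Cons u) ` dl (S - {u})). g L) = (\<Sum>u\<in>S. \<Sum>L\<in>(Cons u) ` dl (S - {u}). g L)"
    by (rule sum.UNION_disjoint) (auto intro!: finite_dl f)
  also have "\<dots> = (\<Sum>u\<in>S. \<Sum>L\<in>dl (S - {u}). g (u # L))"
    by (rule sum.cong[OF refl]) (simp add: sum.reindex)
  finally show ?thesis .
qed

definition pz :: "(nat \<Rightarrow> nat \<Rightarrow> 'c::comm_ring_1) \<Rightarrow> nat \<Rightarrow> nat list \<Rightarrow> nat \<Rightarrow> 'c" where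
  "pz a p L v = prod_list (map (\<lambda>(x, y). a x y) (zip (p # L) (L @ [v])))"

lemma pz_Nil[simp]: "pz a p [] v = a p v" by (simp add: pz_def)
lemma pz_Cons[simp]: "pz a p (u # L) v = a p u * pz a u L v" by (simp add: pz_def)

lemma PL:
  assumes "finite W" "v \<in> W"
  shows "Dg (rowv a v p) W = (\<Sum>L\<in>dl (W - {v}). (-1) ^ length L * pz a p L v * Dg a (W - {v} - set L))"
  using assms
proof (induction "card W" arbitrary: W p rule: less_induct)
  case less
  note fW = less.prems(1) and vW = less.prems(2)
  have "Dg (rowv a v p) W = rowv a v p v v * Dg (rowv a v p) (W - {v}) -
      (\<Sum>u\<in>W - {v}. rowv a v p v u * Dg (rowv (rowv a v p) v u) (W - {u}))"
    by (rule L1[OF fW vW])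
  also have "Dg (rowv a v p) (W - {v}) = Dg a (W - {v})"
    by (rule Dg_cong) (auto simp: rowv_def)
  also have "(\<Sum>u\<in>W - {v}. rowv a v p v u * Dg (rowv (rowv a v p) v u) (W - {u})) =
     (\<Sum>u\<in>W - {v}. a p u * (\<Sum>L\<in>dl (W - {v} - {u}). (-1) ^ length L * pz a u L v * Dg a (W - {v} - {u} - set L)))"
  proof (rule sum.cong[OF refl])
    fix u assume u: "u \<in> W - {v}"
    have r: "rowv (rowv a v p) v u = rowv a v u" using u by (auto simp: rowv_def fun_eq_iff)
    have "card (W - {u}) < card W" using u fW by (meson card_Diff1_less DiffD1)
    from less.hyps[OF this] have "Dg (rowv a v u) (W - {u}) =
       (\<Sum>L\<in>dl (W - {u} - {v}). (-1) ^ length L * pz a u L v * Dg a (W - {u} - {v} - set L))"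
      using fW u vW by auto
    moreover have "W - {u} - {v} = W - {v} - {u}" by auto
    ultimately have IHu: "Dg (rowv a v u) (W - {u}) = (\<Sum>L\<in>dl (W - {v} - {u}). (-1) ^ length L * pz a u L v * Dg a (W - {v} - {u} - set L))" by simp
    show "rowv a v p v u * Dg (rowv (rowv a v p) v u) (W - {u}) =
      a p u * (\<Sum>L\<in>dl (W - {v} - {u}). (-1) ^ length L * pz a u L v * Dg a (W - {v} - {u} - set L))"
    proof -
      have "rowv a v p v u = a p u" by (simp add: rowv_def)
      then show ?thesis
        unfolding r using IHu by simp
    qed
  qed
  finally have "Dg (rowv a v p) W = a p v * Dg a (W - {v}) -
     (\<Sum>u\<in>W - {v}. a p u * (\<Sum>L\<in>dl (W - {v} - {u}). (-1) ^ length L * pz a u L v * Dg a (W - {v} - {u} - set L)))"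
    by (simp add: rowv_def)
  also have "\<dots> = (\<Sum>L\<in>dl (W - {v}). (-1) ^ length L * pz a p L v * Dg a (W - {v} - set L))"
  proof -
    have "(\<Sum>L\<in>dl (W - {v}). (-1) ^ length L * pz a p L v * Dg a (W - {v} - set L)) =
      a p v * Dg a (W - {v}) + (\<Sum>u\<in>W - {v}. \<Sum>L\<in>dl (W - {v} - {u}). (-1) ^ length (u # L) * pz a p (u # L) v * Dg a (W - {v} - set (u # L)))"
      using fW by (subst dl_sum) auto
    also have "(\<Sum>u\<in>W - {v}. \<Sum>L\<in>dl (W - {v} - {u}). (-1) ^ length (u # L) * pz a p (u # L) v * Dg a (W - {v} - set (u # L))) =
       (\<Sum>u\<in>W - {v}. - (a p u * (\<Sum>L\<in>dl (W - {v} - {u}). (-1) ^ length L * pz a u L v * Dg a (W - {v} - {u} - set L))))"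
    proof (rule sum.cong[OF refl])
      fix u
      have "\<And>L. W - {v} - set (u # L) = W - {v} - {u} - set L" by auto
      then show "(\<Sum>L\<in>dl (W - {v} - {u}). (-1) ^ length (u # L) * pz a p (u # L) v * Dg a (W - {v} - set (u # L))) =
         - (a p u * (\<Sum>L\<in>dl (W - {v} - {u}). (-1) ^ length L * pz a u L v * Dg a (W - {v} - {u} - set L)))"
        by (simp add: sum_distrib_left sum_negf[symmetric] mult_ac)
    qed
    finally show ?thesis by (simp add: sum_negf)
  qed
  finally show ?case .
qed

corollary cycle_expansion:
  assumes "finite W" "v \<in> W"
  shows "Dg a W = (\<Sum>L\<in>dl (W - {v}). (-1) ^ length L * pz a v L v * Dg a (W - {v} - set L))"
proof -
  have "rowv a v v = a" by (auto simp: rowv_def fun_eq_iff)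
  then show ?thesis using PL[OF assms, of a v] by simp
qed


definition sh :: "(nat \<Rightarrow> nat) \<Rightarrow> nat \<Rightarrow> nat" where
  "sh p = (\<lambda>k. if k = 0 then 0 else Suc (p (k - 1)))"

lemma transpose_Suc: "transpose (Suc a) (Suc b) (Suc x) = Suc (transpose a b x)"
  by (simp add: transpose_def)

lemma sh_id: "sh id = id" by (auto simp: sh_def fun_eq_iff)

lemma sh_comp: "sh (transpose a b \<circ> p) = transpose (Suc a) (Suc b) \<circ> sh p"
  by (auto simp: sh_def fun_eq_iff transpose_Suc)

lemma swapidseq_sh: "swapidseq n p \<Longrightarrow> swapidseq n (sh p)"
proof (induction n p rule: swapidseq.induct)
  case id then show ?case using sh_id swapidseq.id by metis
next
  case (comp_Suc n p a b)
  then show ?case unfolding sh_comp by (intro swapidseq.comp_Suc) auto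
qed

lemma sign_sh: assumes "permutation p" shows "sign (sh p) = sign p"
proof -
  obtain m where m: "swapidseq m p" using assms unfolding permutation_def by auto
  have "evenperm p = even m" by (rule evenperm_unique[OF m refl])
  moreover have "evenperm (sh p) = even m" by (rule evenperm_unique[OF swapidseq_sh[OF m] refl])
  ultimately show ?thesis by (simp add: sign_def)
qed

lemma sh_permutes: assumes "p permutes {0..<n}" shows "sh p permutes {1..n}"
proof -
  have bij: "bij_betw p {0..<n} {0..<n}" using assms permutes_imp_bij by blast
  have "bij_betw (sh p) {1..n} {1..n}"
  proof -
    have e: "{1..n} = Suc ` {0..<n}" by (simp add: atLeastLessThanSuc_atLeastAtMost[symmetric] image_Suc_atLeastLessThan)
    have "bij_betw (Suc \<circ> p \<circ> (\<lambda>k. k - 1)) (Suc ` {0..<n}) (Suc ` {0..<n})"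
    proof -
      have b1: "bij_betw (\<lambda>k. k - 1) (Suc ` {0..<n}) {0..<n}"
        by (rule bij_betw_byWitness[where f' = Suc]) auto
      have b2: "bij_betw Suc {0..<n} (Suc ` {0..<n})" by (simp add: bij_betw_def)
      show ?thesis using bij_betw_trans[OF bij_betw_trans[OF b1 bij] b2] by (simp add: comp_assoc)
    qed
    moreover have "\<And>k. k \<in> Suc ` {0..<n} \<Longrightarrow> (Suc \<circ> p \<circ> (\<lambda>k. k - 1)) k = sh p k"
      by (auto simp: sh_def)
    ultimately show ?thesis unfolding e using bij_betw_cong by blast
  qed
  moreover have "{x. sh p x \<noteq> x} \<subseteq> {1..n}"
  proof
    fix x assume "x \<in> {x. sh p x \<noteq> x}"
    then have x: "sh p x \<noteq> x" by simp
    then have "x \<noteq> 0" by (auto simp: sh_def split: if_splits)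
    moreover have "x \<le> n"
    proof (rule ccontr)
      assume "\<not> x \<le> n"
      then have "p (x - 1) = x - 1" using assms by (intro permutes_not_in) auto
      then show False using x \<open>x \<noteq> 0\<close> by (simp add: sh_def)
    qed
    ultimately show "x \<in> {1..n}" by auto
  qed
  ultimately show ?thesis by (simp add: permutes_altdef)
qed

lemma unsh_permutes: assumes "q permutes {1..n}" shows "(\<lambda>k. q (Suc k) - 1) permutes {0..<n}"
proof -
  have q0: "q 0 = 0" using assms by (intro permutes_not_in) auto
  have pos: "\<And>k. q (Suc k) \<ge> 1"
  proof -
    fix k show "q (Suc k) \<ge> 1"
    proof (rule ccontr)
      assume "\<not> q (Suc k) \<ge> 1" then have "q (Suc k) = q 0" using q0 by simp
      then show False using permutes_inj[OF assms] by (auto dest: injD)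
    qed
  qed
  have "bij_betw q {1..n} {1..n}" using assms permutes_imp_bij by blast
  have "bij_betw (\<lambda>k. q (Suc k) - 1) {0..<n} {0..<n}"
  proof -
    have e: "{1..n} = Suc ` {0..<n}" by (simp add: atLeastLessThanSuc_atLeastAtMost[symmetric] image_Suc_atLeastLessThan)
    have b1: "bij_betw Suc {0..<n} {1..n}" unfolding e by (simp add: bij_betw_def)
    have b2: "bij_betw (\<lambda>k. k - 1) {1..n} {0..<n}"
      by (rule bij_betw_byWitness[where f' = Suc]) auto
    have "bij_betw ((\<lambda>k. k - 1) \<circ> q \<circ> Suc) {0..<n} {0..<n}"
      using bij_betw_trans[OF bij_betw_trans[OF b1 \<open>bij_betw q {1..n} {1..n}\<close>] b2] by (simp add: comp_assoc)
    then show ?thesis by (simp add: o_def)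
  qed
  moreover have "{x. q (Suc x) - 1 \<noteq> x} \<subseteq> {0..<n}"
  proof
    fix x assume "x \<in> {x. q (Suc x) - 1 \<noteq> x}"
    then have x: "q (Suc x) - 1 \<noteq> x" by simp
    show "x \<in> {0..<n}"
    proof (rule ccontr)
      assume "x \<notin> {0..<n}"
      then have "q (Suc x) = Suc x" using assms by (intro permutes_not_in) auto
      then show False using x by simp
    qed
  qed
  ultimately show ?thesis by (simp add: permutes_altdef)
qed

lemma Dg_shift:
  fixes a :: "nat \<Rightarrow> nat \<Rightarrow> 'c::comm_ring_1"
  shows "(\<Sum>p\<in>{p. p permutes {0..<n}}. of_int (sign p) * (\<Prod>i = 0..<n. a (Suc i) (Suc (p i)))) = Dg a {1..n}"
  unfolding Dg_def
proof (rule sum.reindex_bij_witness[where j = sh and i = "\<lambda>q k. q (Suc k) - 1"])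
  fix p assume "p \<in> {p. p permutes {0..<n}}"
  then have p: "p permutes {0..<n}" by simp
  show "(\<lambda>k. sh p (Suc k) - 1) = p" by (simp add: sh_def)
  show "sh p \<in> {p. p permutes {1..n}}" using sh_permutes[OF p] by simp
  have "sign (sh p) = sign p" using p by (intro sign_sh permutes_imp_permutation) auto
  moreover have "(\<Prod>i\<in>{1..n}. a i (sh p i)) = (\<Prod>i = 0..<n. a (Suc i) (Suc (p i)))"
  proof -
    have e: "{1..n} = Suc ` {0..<n}" by (simp add: atLeastLessThanSuc_atLeastAtMost[symmetric] image_Suc_atLeastLessThan)
    show ?thesis unfolding e by (subst prod.reindex) (auto simp: sh_def)
  qed
  ultimately show "of_int (sign (sh p)) * (\<Prod>i\<in>{1..n}. a i (sh p i)) =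
     of_int (sign p) * (\<Prod>i = 0..<n. a (Suc i) (Suc (p i)))" by simp
next
  fix q assume "q \<in> {p. p permutes {1..n}}"
  then have q: "q permutes {1..n}" by simp
  show "(\<lambda>k. q (Suc k) - 1) \<in> {p. p permutes {0..<n}}" using unsh_permutes[OF q] by simp
  have q0: "q 0 = 0" using q by (intro permutes_not_in) auto
  have pos: "\<And>k. k \<noteq> 0 \<Longrightarrow> q k \<noteq> 0"
    using permutes_inj[OF q] q0 by (metis injD)
  show "sh (\<lambda>k. q (Suc k) - 1) = q"
  proof
    fix x show "sh (\<lambda>k. q (Suc k) - 1) x = q x"
      using pos[of x] q0 by (cases x) (auto simp: sh_def)
  qed
qed


definition Am :: "(nat \<Rightarrow> nat \<Rightarrow> complex) \<Rightarrow> (nat \<Rightarrow> real) \<Rightarrow> nat \<Rightarrow> nat \<Rightarrow> complex poly" where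
  "Am b w1 u v = (if u = v then [:- complex_of_real (w1 u), 1:] else [:- b u v:])"

lemma phi_Dg: "phi n E w w1 = Dg (Am (wadj E w w1) w1) {1..n}"
proof -
  let ?M = "wadj_mat n E w w1"
  let ?C = "char_poly_matrix ?M"
  have dim: "dim_row ?M = n" "dim_col ?M = n" by (auto simp: wadj_mat_def)
  have dC: "dim_row ?C = n" "dim_col ?C = n" by (auto simp: char_poly_matrix_def dim)
  have ent: "\<And>i j. i < n \<Longrightarrow> j < n \<Longrightarrow> ?C $$ (i, j) = Am (wadj E w w1) w1 (Suc i) (Suc j)"
    by (auto simp: char_poly_matrix_def wadj_mat_def Am_def wadj_def)
  have "phi n E w w1 = (\<Sum>p\<in>{p. p permutes {0..<n}}. of_int (sign p) * (\<Prod>i = 0..<n. ?C $$ (i, p i)))"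
    unfolding phi_def char_poly_def det_def dC by simp
  also have "\<dots> = (\<Sum>p\<in>{p. p permutes {0..<n}}. of_int (sign p) * (\<Prod>i = 0..<n. Am (wadj E w w1) w1 (Suc i) (Suc (p i))))"
  proof (rule sum.cong[OF refl])
    fix p assume "p \<in> {p. p permutes {0..<n}}"
    then have "\<And>i. i < n \<Longrightarrow> p i < n" by (auto dest: permutes_in_image)
    then show "of_int (sign p) * (\<Prod>i = 0..<n. ?C $$ (i, p i)) =
       of_int (sign p) * (\<Prod>i = 0..<n. Am (wadj E w w1) w1 (Suc i) (Suc (p i)))"
      by (auto intro!: prod.cong simp: ent)
  qed
  also have "\<dots> = Dg (Am (wadj E w w1) w1) {1..n}" by (rule Dg_shift)
  finally show ?thesis .
qed


definition darcs :: "nat list \<Rightarrow> (nat \<times> nat) set" where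
  "darcs c = set (zip c (rotate1 c))"

definition cp :: "(nat \<Rightarrow> nat \<Rightarrow> 'c::comm_ring_1) \<Rightarrow> nat list \<Rightarrow> 'c" where
  "cp b c = prod_list (map (\<lambda>(x, y). b x y) (zip c (rotate1 c)))"

lemma darcs_nth: "darcs c = {(c ! i, c ! (Suc i mod length c)) | i. i < length c}"
  unfolding darcs_def set_zip by (auto simp: nth_rotate1)

lemma darcs_nthI: "i < length c \<Longrightarrow> (c ! i, c ! (Suc i mod length c)) \<in> darcs c"
  unfolding darcs_nth by auto

lemma darcs_set: assumes "(x, y) \<in> darcs c" shows "x \<in> set c \<and> y \<in> set c"
proof -
  obtain i where i: "i < length c" "x = c ! i" "y = c ! (Suc i mod length c)"
    using assms unfolding darcs_nth by auto
  have "0 < length c" using i by linarith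
  then have "Suc i mod length c < length c" by simp
  then show ?thesis using i by simp
qed

lemma Suc_mod_cases: "i < m \<Longrightarrow> Suc i mod m = (if Suc i = m then 0 else Suc i)"
  by auto

lemma darcs_irrefl: assumes "distinct c" "2 \<le> length c" "(x, y) \<in> darcs c" shows "x \<noteq> y"
proof -
  obtain i where i: "i < length c" "x = c ! i" "y = c ! (Suc i mod length c)"
    using assms unfolding darcs_nth by auto
  have "Suc i mod length c < length c" "Suc i mod length c \<noteq> i"
    using i assms(2) by (auto simp: Suc_mod_cases)
  then show ?thesis using i assms(1) by (simp add: nth_eq_iff_index_eq)
qed

lemma darcs_card: "distinct c \<Longrightarrow> card (darcs c) = length c"
  unfolding darcs_def by (simp add: distinct_card distinct_zipI1)

lemma darcs_fun: "distinct c \<Longrightarrow> (x, y) \<in> darcs c \<Longrightarrow> (x, y') \<in> darcs c \<Longrightarrow> y = y'"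
  unfolding darcs_nth by (auto simp: nth_eq_iff_index_eq)

lemma darcs_inj: assumes "distinct c" "(x, y) \<in> darcs c" "(x', y) \<in> darcs c" shows "x = x'"
proof -
  obtain i where i: "i < length c" "x = c ! i" "y = c ! (Suc i mod length c)"
    using assms unfolding darcs_nth by auto
  obtain j where j: "j < length c" "x' = c ! j" "y = c ! (Suc j mod length c)"
    using assms unfolding darcs_nth by auto
  have "Suc i mod length c < length c" "Suc j mod length c < length c"
    using i j by (auto simp: Suc_mod_cases)
  then have "Suc i mod length c = Suc j mod length c"
    using i j assms(1) by (simp add: nth_eq_iff_index_eq)
  then have "i = j" using i j by (auto simp: Suc_mod_cases split: if_splits)
  then show ?thesis using i j by simp
qed

lemma finite_darcs[simp]: "finite (darcs c)" unfolding darcs_def by simp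

lemma cycle_edges_darcs: "cycle_edges c = (\<lambda>(x, y). {x, y}) ` darcs c"
  unfolding cycle_edges_def darcs_nth by auto

lemma cycle_list_darcs: "cycle_list E c \<longleftrightarrow> 3 \<le> length c \<and> distinct c \<and> (\<forall>(x, y)\<in>darcs c. E x y)"
  unfolding cycle_list_def darcs_nth by auto

lemma cp_darcs: "distinct c \<Longrightarrow> cp b c = (\<Prod>(x, y)\<in>darcs c. b x y)"
  unfolding cp_def darcs_def by (simp add: prod.distinct_set_conv_list distinct_zipI1)

lemma w2_list_cp: "w2_list b c = cp b c + cp (\<lambda>x y. b y x) c"
proof -
  have "\<And>b. (\<Prod>i<length c. b (c ! i) (c ! ((i + 1) mod length c))) = cp b c"
    unfolding cp_def prod.list_conv_set_nth
    by (auto intro!: prod.cong simp: atLeast0LessThan nth_rotate1)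
  from this[of b] this[of "\<lambda>x y. b y x"] show ?thesis unfolding w2_list_def by simp
qed

lemma Union_cycle_edges: assumes "c \<noteq> []" shows "\<Union> (cycle_edges c) = set c"
proof
  have bnd: "\<And>i. i < length c \<Longrightarrow> Suc i mod length c < length c" using assms by simp
  show "\<Union> (cycle_edges c) \<subseteq> set c" unfolding cycle_edges_def using bnd by (auto intro!: nth_mem)
  show "set c \<subseteq> \<Union> (cycle_edges c)"
  proof
    fix x assume "x \<in> set c"
    then obtain i where i: "i < length c" "x = c ! i" by (auto simp: in_set_conv_nth)
    then have "{c ! i, c ! (Suc i mod length c)} \<in> cycle_edges c" unfolding cycle_edges_def by auto
    then show "x \<in> \<Union> (cycle_edges c)" using i by blast
  qed
qed

lemma cycle_edges_pair: "{x, y} \<in> cycle_edges c \<Longrightarrow> (x, y) \<in> darcs c \<or> (y, x) \<in> darcs c"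
  unfolding cycle_edges_darcs by (auto simp: doubleton_eq_iff)

lemma darcs_edge: "(x, y) \<in> darcs c \<Longrightarrow> {x, y} \<in> cycle_edges c"
  unfolding cycle_edges_darcs by force

lemma darcs_rev: "darcs (v # rev L) = converse (darcs (v # L))"
proof -
  have "darcs (v # rev L) = set (zip (rev (L @ [v])) (rev (v # L)))"
    by (simp add: darcs_def)
  also have "\<dots> = set (zip (L @ [v]) (v # L))" by (subst zip_rev) auto
  also have "\<dots> = converse (darcs (v # L))"
    unfolding darcs_def by (subst zip_commute) auto
  finally show ?thesis .
qed

lemma cycle_edges_rev: "cycle_edges (v # rev L) = cycle_edges (v # L)"
  unfolding cycle_edges_darcs darcs_rev by (auto simp: insert_commute image_iff)

lemma darcs_rotate: assumes "distinct c" shows "darcs (rotate k c) = darcs c"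
proof -
  have "darcs (rotate k c) \<subseteq> darcs c"
  proof
    fix p assume "p \<in> darcs (rotate k c)"
    then obtain i where i: "i < length c" and p: "p = (rotate k c ! i, rotate k c ! (Suc i mod length c))"
      unfolding darcs_nth by auto
    have m: "length c > 0" using i by linarith
    have "rotate k c ! (Suc i mod length c) = c ! ((k + Suc i mod length c) mod length c)"
      using m by (simp add: nth_rotate)
    also have "(k + Suc i mod length c) mod length c = Suc ((k + i) mod length c) mod length c"
      by (simp add: mod_add_right_eq mod_Suc_eq)
    finally have "p = (c ! ((k + i) mod length c), c ! (Suc ((k + i) mod length c) mod length c))"
      using p i by (simp add: nth_rotate)
    moreover have "(k + i) mod length c < length c" using m by simp
    ultimately show "p \<in> darcs c" using darcs_nthI by metis
  qed
  moreover have "card (darcs (rotate k c)) = card (darcs c)"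
    using assms by (simp add: darcs_card)
  ultimately show ?thesis by (intro card_subset_eq) auto
qed

lemma cycle_edges_rotate: "distinct c \<Longrightarrow> cycle_edges (rotate k c) = cycle_edges c"
  unfolding cycle_edges_darcs by (simp add: darcs_rotate)

lemma D3a:
  assumes dc: "distinct c" and l3: "3 \<le> length c" and dd: "distinct d" and ld: "length d = length c"
    and ce: "cycle_edges d = cycle_edges c" and st: "(d ! 0, d ! 1) \<in> darcs c"
  shows "darcs d = darcs c"
proof -
  let ?m = "length c"
  have step: "\<forall>i. Suc i < ?m \<longrightarrow> (d ! i, d ! (Suc i)) \<in> darcs c"
  proof
    fix i show "Suc i < ?m \<longrightarrow> (d ! i, d ! (Suc i)) \<in> darcs c"
    proof (induction i)
      case 0 then show ?case using st by simp
    next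
      case (Suc i)
      show ?case
      proof
        assume si: "Suc (Suc i) < ?m"
        then have ih: "(d ! i, d ! Suc i) \<in> darcs c" using Suc by simp
        have "(d ! Suc i, d ! (Suc (Suc i) mod length d)) \<in> darcs d"
          using si ld by (intro darcs_nthI) simp
        then have "{d ! Suc i, d ! Suc (Suc i)} \<in> cycle_edges c"
          using si ld ce by (auto dest: darcs_edge)
        then have "(d ! Suc i, d ! Suc (Suc i)) \<in> darcs c \<or> (d ! Suc (Suc i), d ! Suc i) \<in> darcs c"
          by (rule cycle_edges_pair)
        moreover have "(d ! Suc (Suc i), d ! Suc i) \<notin> darcs c"
        proof
          assume "(d ! Suc (Suc i), d ! Suc i) \<in> darcs c"
          then have "d ! Suc (Suc i) = d ! i" using darcs_inj[OF dc _ ih] by blast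
          then show False using dd si ld by (simp add: nth_eq_iff_index_eq)
        qed
        ultimately show "(d ! Suc i, d ! Suc (Suc i)) \<in> darcs c" by blast
      qed
    qed
  qed
  have last: "(d ! (?m - 1), d ! 0) \<in> darcs c"
  proof -
    have m1: "Suc (?m - 2) = ?m - 1" "Suc (?m - 1) = ?m" using l3 by auto
    have a: "(d ! (?m - 2), d ! (?m - 1)) \<in> darcs c" using step[rule_format, of "?m - 2"] m1 l3 by simp
    have "(d ! (?m - 1), d ! (Suc (?m - 1) mod length d)) \<in> darcs d"
      using ld l3 by (intro darcs_nthI) simp
    then have "{d ! (?m - 1), d ! 0} \<in> cycle_edges c" using ce ld m1 by (auto dest: darcs_edge)
    then have "(d ! (?m - 1), d ! 0) \<in> darcs c \<or> (d ! 0, d ! (?m - 1)) \<in> darcs c"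
      by (rule cycle_edges_pair)
    moreover have "(d ! 0, d ! (?m - 1)) \<notin> darcs c"
    proof
      assume "(d ! 0, d ! (?m - 1)) \<in> darcs c"
      then have "d ! 0 = d ! (?m - 2)" using darcs_inj[OF dc _ a] by blast
      moreover have "0 \<noteq> ?m - 2" "0 < length d" "?m - 2 < length d" using l3 ld by auto
      ultimately show False using nth_eq_iff_index_eq[OF dd] by metis
    qed
    ultimately show ?thesis by blast
  qed
  have "darcs d \<subseteq> darcs c"
  proof
    fix p assume "p \<in> darcs d"
    then obtain i where i: "i < ?m" and p: "p = (d ! i, d ! (Suc i mod ?m))"
      unfolding darcs_nth ld by auto
    show "p \<in> darcs c"
    proof (cases "Suc i = ?m")
      case True then have "i = ?m - 1" by simp
      then show ?thesis using p last True by simp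
    next
      case False then show ?thesis using p i step by simp
    qed
  qed
  moreover have "card (darcs d) = card (darcs c)" using dc dd ld by (simp add: darcs_card)
  ultimately show ?thesis by (intro card_subset_eq) auto
qed

lemma cycle_edges_nonempty: "c \<noteq> [] \<Longrightarrow> cycle_edges c \<noteq> {}"
  unfolding cycle_edges_def by auto

lemma length_eq_edges:
  assumes "distinct c" "distinct d" "c \<noteq> []" "cycle_edges d = cycle_edges c"
  shows "length d = length c"
proof -
  have "d \<noteq> []" using assms cycle_edges_nonempty[of c] by (auto simp: cycle_edges_def)
  then have "set d = set c" using assms Union_cycle_edges by metis
  then show ?thesis using assms by (metis distinct_card)
qed

lemma D3:
  assumes dc: "distinct (v # L)" and l2: "2 \<le> length L" and dd: "distinct d"
    and ce: "cycle_edges d = cycle_edges (v # L)"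
  shows "darcs d = darcs (v # L) \<or> darcs d = converse (darcs (v # L))"
proof -
  have ld: "length d = length (v # L)" using length_eq_edges[OF dc dd _ ce] by simp
  have l3: "3 \<le> length (v # L)" using l2 by simp
  have "(d ! 0, d ! (Suc 0 mod length d)) \<in> darcs d" using ld by (intro darcs_nthI) simp
  moreover have "Suc 0 mod length d = 1" using ld l2 by (cases L) auto
  ultimately have "(d ! 0, d ! 1) \<in> darcs d" by simp
  then have "{d ! 0, d ! 1} \<in> cycle_edges (v # L)" using ce by (auto dest: darcs_edge)
  then have "(d ! 0, d ! 1) \<in> darcs (v # L) \<or> (d ! 1, d ! 0) \<in> darcs (v # L)"
    by (rule cycle_edges_pair)
  then show ?thesis
  proof
    assume "(d ! 0, d ! 1) \<in> darcs (v # L)"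
    then show ?thesis using D3a[OF dc l3 dd ld ce] by simp
  next
    assume "(d ! 1, d ! 0) \<in> darcs (v # L)"
    then have st: "(d ! 0, d ! 1) \<in> darcs (v # rev L)" by (simp add: darcs_rev)
    have dc': "distinct (v # rev L)" using dc by simp
    have "darcs d = darcs (v # rev L)"
      using D3a[OF dc' _ dd _ _ st] l3 ld ce cycle_edges_rev[of v L] by simp
    then show ?thesis by (simp add: darcs_rev)
  qed
qed

lemma darcs_head_eq:
  assumes "distinct (v # L)" "distinct (v # L')" "darcs (v # L') = darcs (v # L)"
  shows "L' = L"
proof -
  have len: "length (v # L') = length (v # L)"
    using darcs_card[OF assms(1)] darcs_card[OF assms(2)] assms(3) by simp
  have "\<forall>i < length (v # L). (v # L') ! i = (v # L) ! i"
  proof (intro allI)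
    fix i show "i < length (v # L) \<longrightarrow> (v # L') ! i = (v # L) ! i"
    proof (induction i)
      case 0 then show ?case by simp
    next
      case (Suc i)
      show ?case
      proof
        assume si: "Suc i < length (v # L)"
        have a: "((v # L) ! i, (v # L) ! Suc i) \<in> darcs (v # L)"
          using darcs_nthI[of i "v # L"] si by simp
        have "((v # L') ! i, (v # L') ! Suc i) \<in> darcs (v # L')"
          using darcs_nthI[of i "v # L'"] si len by (simp del: length_Cons)
        then have b: "((v # L) ! i, (v # L') ! Suc i) \<in> darcs (v # L)"
          using Suc si assms(3) by simp
        show "(v # L') ! Suc i = (v # L) ! Suc i" using darcs_fun[OF assms(1) b a] .
      qed
    qed
  qed
  then have "v # L' = v # L" using len by (intro nth_equalityI) auto
  then show ?thesis by simp
qed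


lemma PM:
  assumes "\<forall>(x, y)\<in>set zs. x \<noteq> y"
  shows "prod_list (map (\<lambda>(x, y). Am b w1 x y) zs) = (-1) ^ length zs * [:prod_list (map (\<lambda>(x, y). b x y) zs):]"
  using assms
proof (induction zs)
  case Nil then show ?case by simp
next
  case (Cons z zs)
  obtain x y where z: "z = (x, y)" by fastforce
  have xy: "x \<noteq> y" using Cons.prems z by auto
  have "prod_list (map (\<lambda>(x, y). Am b w1 x y) (z # zs)) = [:- b x y:] * ((-1) ^ length zs * [:prod_list (map (\<lambda>(x, y). b x y) zs):])"
    using Cons xy z by (simp add: Am_def)
  also have "\<dots> = (-1) ^ length (z # zs) * [:prod_list (map (\<lambda>(x, y). b x y) (z # zs)):]"
    using z by (simp add: algebra_simps)
  finally show ?case .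
qed

lemma pz_cp:
  assumes "distinct (v # L)" "L \<noteq> []"
  shows "pz (Am b w1) v L v = (-1) ^ Suc (length L) * [:cp b (v # L):]"
proof -
  have r: "rotate1 (v # L) = L @ [v]" by simp
  have "\<forall>(x, y)\<in>set (zip (v # L) (rotate1 (v # L))). x \<noteq> y"
  proof
    fix p assume "p \<in> set (zip (v # L) (rotate1 (v # L)))"
    then have "p \<in> darcs (v # L)" by (simp add: darcs_def)
    moreover have "2 \<le> length (v # L)" using assms(2) by (cases L) auto
    ultimately show "case p of (x, y) \<Rightarrow> x \<noteq> y" using darcs_irrefl[OF assms(1)] by (cases p) auto
  qed
  from PM[OF this, of b w1] show ?thesis
    unfolding pz_def cp_def r by simp
qed

lemma DR:
  fixes b :: "nat \<Rightarrow> nat \<Rightarrow> complex"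
  assumes fW: "finite W" and vW: "v \<in> W"
  shows "Dg (Am b w1) W = [:- complex_of_real (w1 v), 1:] * Dg (Am b w1) (W - {v})
     - (\<Sum>u\<in>W - {v}. [:b v u * b u v:] * Dg (Am b w1) (W - {v} - {u}))
     - (\<Sum>L\<in>{L \<in> dl (W - {v}). 2 \<le> length L}. [:cp b (v # L):] * Dg (Am b w1) (W - {v} - set L))"
proof -
  let ?a = "Am b w1"
  let ?S = "W - {v}"
  let ?f = "\<lambda>L. (-1) ^ length L * pz ?a v L v * Dg ?a (?S - set L)"
  have fS: "finite ?S" using fW by simp
  have e2: "{L \<in> dl ?S. length L < 2} = insert [] ((\<lambda>u. [u]) ` ?S)"
  proof (intro equalityI subsetI)
    fix x assume "x \<in> {L \<in> dl ?S. length L < 2}"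
    then show "x \<in> insert [] ((\<lambda>u. [u]) ` ?S)"
      by (cases x) (auto simp: image_iff dl_def)
  next
    fix x assume "x \<in> insert [] ((\<lambda>u. [u]) ` ?S)"
    then show "x \<in> {L \<in> dl ?S. length L < 2}" by (auto simp: dl_def)
  qed
  have "Dg ?a W = (\<Sum>L\<in>dl ?S. ?f L)" by (rule cycle_expansion[OF fW vW])
  also have "dl ?S = {L \<in> dl ?S. length L < 2} \<union> {L \<in> dl ?S. 2 \<le> length L}" by auto
  also have "(\<Sum>L\<in>{L \<in> dl ?S. length L < 2} \<union> {L \<in> dl ?S. 2 \<le> length L}. ?f L) =
     (\<Sum>L\<in>{L \<in> dl ?S. length L < 2}. ?f L) + (\<Sum>L\<in>{L \<in> dl ?S. 2 \<le> length L}. ?f L)"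
    by (rule sum.union_disjoint) (auto intro: finite_subset[OF _ finite_dl[OF fS]])
  also note e2
  also have "(\<Sum>L\<in>insert [] ((\<lambda>u. [u]) ` ?S). ?f L) = ?f [] + (\<Sum>u\<in>?S. ?f [u])"
    using fS by (subst sum.insert) (auto simp: sum.reindex inj_on_def)
  also have "?f [] = [:- complex_of_real (w1 v), 1:] * Dg ?a ?S" by (simp add: Am_def)
  also have "(\<Sum>u\<in>?S. ?f [u]) = - (\<Sum>u\<in>W - {v}. [:b v u * b u v:] * Dg ?a (W - {v} - {u}))"
    unfolding sum_negf[symmetric]
    by (rule sum.cong[OF refl]) (auto simp: Am_def)
  also have "(\<Sum>L\<in>{L \<in> dl ?S. 2 \<le> length L}. ?f L) =
     - (\<Sum>L\<in>{L \<in> dl ?S. 2 \<le> length L}. [:cp b (v # L):] * Dg ?a (W - {v} - set L))"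
    unfolding sum_negf[symmetric]
  proof (rule sum.cong[OF refl])
    fix L assume "L \<in> {L \<in> dl ?S. 2 \<le> length L}"
    then have L: "distinct (v # L)" "L \<noteq> []" by (auto simp: dl_def)
    show "?f L = - ([:cp b (v # L):] * Dg ?a (W - {v} - set L))"
      unfolding pz_cp[OF L] by (simp add: power_Suc)
  qed
  finally show ?thesis by (simp add: algebra_simps)
qed


definition mw :: "(nat set \<Rightarrow> complex) \<Rightarrow> nat set set \<Rightarrow> real" where
  "mw w M = (-1) ^ card M * (\<Prod>e\<in>M. cmod (w e)) ^ 2"

lemma matching_edge: "matching E S M \<Longrightarrow> e \<in> M \<Longrightarrow> \<exists>u v. e = {u, v} \<and> u \<in> S \<and> v \<in> S \<and> E u v"
  by (simp add: matching_def)

lemma matching_disj: "matching E S M \<Longrightarrow> e1 \<in> M \<Longrightarrow> e2 \<in> M \<Longrightarrow> e1 \<noteq> e2 \<Longrightarrow> e1 \<inter> e2 = {}"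
  by (simp add: matching_def)

lemma matchingI:
  assumes "\<And>e. e \<in> M \<Longrightarrow> \<exists>u v. e = {u, v} \<and> u \<in> S \<and> v \<in> S \<and> E u v"
    and "\<And>e1 e2. e1 \<in> M \<Longrightarrow> e2 \<in> M \<Longrightarrow> e1 \<noteq> e2 \<Longrightarrow> e1 \<inter> e2 = {}"
  shows "matching E S M"
  using assms by (simp add: matching_def)

lemma matching_Pow: assumes "matching E S M" shows "M \<subseteq> Pow S"
proof
  fix e assume "e \<in> M"
  from matching_edge[OF assms this] obtain u v where "e = {u, v}" "u \<in> S" "v \<in> S" by blast
  then show "e \<in> Pow S" by simp
qed

lemma matching_sub: "matching E S M \<Longrightarrow> \<Union>M \<subseteq> S"
  using matching_Pow by blast

lemma finite_mt: "finite T \<Longrightarrow> finite {M. matching E T M}"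
proof -
  assume "finite T"
  then have "finite (Pow (Pow T))" by simp
  moreover have "{M. matching E T M} \<subseteq> Pow (Pow T)" using matching_Pow by blast
  ultimately show ?thesis by (rule finite_subset[rotated])
qed

lemma matching_mono_iff: assumes ST: "S \<subseteq> T" shows "matching E S M \<longleftrightarrow> matching E T M \<and> \<Union>M \<subseteq> S"
proof
  assume m: "matching E S M"
  have "\<forall>e\<in>M. \<exists>u v. e = {u, v} \<and> u \<in> T \<and> v \<in> T \<and> E u v"
  proof
    fix e assume "e \<in> M"
    then obtain u v where "e = {u, v}" "u \<in> S" "v \<in> S" "E u v" using matching_edge[OF m] by blast
    then show "\<exists>u v. e = {u, v} \<and> u \<in> T \<and> v \<in> T \<and> E u v" using ST by blast
  qed
  then show "matching E T M \<and> \<Union>M \<subseteq> S" using matching_disj[OF m] matching_sub[OF m] by (auto intro!: matchingI)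
next
  assume m: "matching E T M \<and> \<Union>M \<subseteq> S"
  have "\<forall>e\<in>M. \<exists>u v. e = {u, v} \<and> u \<in> S \<and> v \<in> S \<and> E u v"
  proof
    fix e assume e: "e \<in> M"
    then obtain u v where "e = {u, v}" "E u v" using matching_edge m by blast
    moreover have "e \<subseteq> S" using m e by blast
    ultimately show "\<exists>u v. e = {u, v} \<and> u \<in> S \<and> v \<in> S \<and> E u v" by blast
  qed
  then show "matching E S M" using m matching_disj[of E T M] by (auto intro!: matchingI)
qed

lemma matching_card:
  assumes irr: "\<forall>u. \<not> E u u" and m: "matching E S M" and fS: "finite S"
  shows "card (\<Union>M) = 2 * card M"
proof -
  have fM: "finite M" using matching_Pow[OF m] fS by (meson finite_Pow_iff finite_subset)
  have "card (\<Union>M) = sum card M"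
  proof (rule card_Union_disjoint)
    show "pairwise disjnt M"
    proof (rule pairwiseI)
      fix x y assume "x \<in> M" "y \<in> M" "x \<noteq> y"
      then show "disjnt x y" using matching_disj[OF m] unfolding disjnt_def by simp
    qed
    fix A assume "A \<in> M" then show "finite A" using matching_edge[OF m] by fastforce
  qed
  also have "\<dots> = sum (\<lambda>_. 2) M"
  proof (rule sum.cong[OF refl])
    fix e assume "e \<in> M"
    then obtain u v where "e = {u, v}" "E u v" using matching_edge[OF m] by blast
    then have "u \<noteq> v" "e = {u, v}" using irr by auto
    then show "card e = 2" by simp
  qed
  finally show ?thesis by simp
qed

lemma prod_const_poly: "finite A \<Longrightarrow> (\<Prod>x\<in>A. [:f x:]) = [:\<Prod>x\<in>A. f x:]"
  by (induction A rule: finite_induct) (auto simp: mult.commute)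

lemma eta_closed:
  assumes irr: "\<forall>u. \<not> E u u" and fT: "finite T"
  shows "eta E w w1 T = (\<Sum>M\<in>{M. matching E T M}. Polynomial.smult (mw w M) (\<Prod>x\<in>T - \<Union>M. [:- w1 x, 1:]))"
proof -
  let ?c = "\<lambda>S. (-1) ^ card (T - S) * (\<Prod>v\<in>T - S. w1 v)"
  let ?g = "\<lambda>S M. Polynomial.smult (?c S) (monom (mw w M) (card S - 2 * card M))"
  have "eta E w w1 T = (\<Sum>S\<in>Pow T. \<Sum>M\<in>{M \<in> {M. matching E T M}. matching E S M}. ?g S M)"
    unfolding eta_def mu_def mw_def
  proof (rule sum.cong[OF refl])
    fix S assume S: "S \<in> Pow T"
    have "{M. matching E S M} = {M \<in> {M. matching E T M}. matching E S M}"
      using matching_mono_iff[of S T E] S by auto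
    then show "Polynomial.smult ((-1) ^ card (T - S) * (\<Prod>v\<in>T - S. w1 v))
        (\<Sum>M\<in>{M. matching E S M}. monom ((-1) ^ card M * (\<Prod>e\<in>M. cmod (w e))\<^sup>2) (card S - 2 * card M)) =
      (\<Sum>M\<in>{M \<in> {M. matching E T M}. matching E S M}.
         Polynomial.smult ((-1) ^ card (T - S) * (\<Prod>v\<in>T - S. w1 v)) (monom ((-1) ^ card M * (\<Prod>e\<in>M. cmod (w e))\<^sup>2) (card S - 2 * card M)))"
      by (simp add: smult_sum2)
  qed
  also have "\<dots> = (\<Sum>M\<in>{M. matching E T M}. \<Sum>S\<in>{S \<in> Pow T. matching E S M}. ?g S M)"
    by (rule sum.swap_restrict) (use fT finite_mt in auto)
  also have "\<dots> = (\<Sum>M\<in>{M. matching E T M}. Polynomial.smult (mw w M) (\<Prod>x\<in>T - \<Union>M. [:- w1 x, 1:]))"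
  proof (rule sum.cong[OF refl])
    fix M assume "M \<in> {M. matching E T M}"
    then have m: "matching E T M" by simp
    let ?U = "\<Union>M" let ?R = "T - \<Union>M"
    have UT: "?U \<subseteq> T" using matching_sub[OF m] .
    have fR: "finite ?R" using fT by simp
    have cU: "card ?U = 2 * card M" by (rule matching_card[OF irr m fT])
    have fU: "finite ?U" using UT fT finite_subset by blast
    have e: "{S \<in> Pow T. matching E S M} = (\<lambda>S'. ?U \<union> S') ` Pow ?R"
    proof (intro equalityI subsetI)
      fix S assume "S \<in> {S \<in> Pow T. matching E S M}"
      then have "S \<subseteq> T" "?U \<subseteq> S" using matching_sub[of E S M] by auto
      then show "S \<in> (\<lambda>S'. ?U \<union> S') ` Pow ?R" by (intro image_eqI[of _ _ "S - ?U"]) auto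
    next
      fix S assume "S \<in> (\<lambda>S'. ?U \<union> S') ` Pow ?R"
      then obtain S' where "S' \<subseteq> ?R" "S = ?U \<union> S'" by auto
      then show "S \<in> {S \<in> Pow T. matching E S M}" using m UT matching_mono_iff[of S T E M] by auto
    qed
    have inj: "inj_on (\<lambda>S'. ?U \<union> S') (Pow ?R)"
      unfolding inj_on_def Pow_iff by blast
    have "(\<Sum>S\<in>{S \<in> Pow T. matching E S M}. ?g S M) = (\<Sum>S'\<in>Pow ?R. ?g (?U \<union> S') M)"
      unfolding e sum.reindex[OF inj] by (simp add: o_def)
    also have "\<dots> = (\<Sum>S'\<in>Pow ?R. Polynomial.smult (mw w M) ([:0, 1:] ^ card S' * [:\<Prod>x\<in>?R - S'. - w1 x:]))"
    proof (rule sum.cong[OF refl])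
      fix S' assume "S' \<in> Pow ?R"
      then have S': "S' \<subseteq> ?R" by simp
      have fS': "finite S'" using S' fR finite_subset by blast
      have "card (?U \<union> S') = card ?U + card S'" using S' fU fS' by (subst card_Un_disjoint) auto
      then have ce: "card (?U \<union> S') - 2 * card M = card S'" using cU by simp
      have te: "T - (?U \<union> S') = ?R - S'" by auto
      have "(\<Prod>x\<in>?R - S'. - w1 x) = (-1) ^ card (?R - S') * (\<Prod>x\<in>?R - S'. w1 x)"
        by (simp add: prod_uminus)
      then show "?g (?U \<union> S') M = Polynomial.smult (mw w M) ([:0, 1:] ^ card S' * [:\<Prod>x\<in>?R - S'. - w1 x:])"
        unfolding ce te by (simp add: monom_altdef mult.commute)
    qed
    also have "\<dots> = Polynomial.smult (mw w M) (\<Sum>S'\<in>Pow ?R. (\<Prod>x\<in>S'. [:0, 1:]) * (\<Prod>x\<in>?R - S'. [:- w1 x:]))"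
    proof -
      have "\<And>S'. S' \<in> Pow ?R \<Longrightarrow> [:0, 1:] ^ card S' * [:\<Prod>x\<in>?R - S'. - w1 x:] = (\<Prod>x\<in>S'. [:0, 1:]) * (\<Prod>x\<in>?R - S'. [:- w1 x:])"
        using fR by (simp add: prod_const_poly)
      then show ?thesis by (simp add: smult_sum2)
    qed
    also have "(\<Sum>S'\<in>Pow ?R. (\<Prod>x\<in>S'. [:0, 1:]) * (\<Prod>x\<in>?R - S'. [:- w1 x:])) = (\<Prod>x\<in>?R. [:0, 1:] + [:- w1 x:])"
      by (rule prod_add[symmetric, OF fR])
    also have "(\<Prod>x\<in>?R. [:0, 1:] + [:- w1 x:]) = (\<Prod>x\<in>?R. [:- w1 x, 1:])" by simp
    finally show "(\<Sum>S\<in>{S \<in> Pow T. matching E S M}. ?g S M) = Polynomial.smult (mw w M) (\<Prod>x\<in>T - \<Union>M. [:- w1 x, 1:])" .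
  qed
  finally show ?thesis .
qed


lemma mw_insert:
  assumes "finite M" "e \<notin> M"
  shows "mw w (insert e M) = - (cmod (w e))\<^sup>2 * mw w M"
  using assms by (simp add: mw_def power_mult_distrib)

lemma eta_rec:
  assumes sym: "\<forall>u v. E u v \<longrightarrow> E v u" and irr: "\<forall>u. \<not> E u u"
    and fT: "finite T" and vT: "v \<in> T"
  shows "eta E w w1 T = [:- w1 v, 1:] * eta E w w1 (T - {v}) -
     (\<Sum>u\<in>{u \<in> T - {v}. E v u}. [:(cmod (w {v, u}))\<^sup>2:] * eta E w w1 (T - {v} - {u}))"
proof -
  let ?P = "\<lambda>M T. Polynomial.smult (mw w M) (\<Prod>x\<in>T - \<Union>M. [:- w1 x, 1:])"
  let ?mt = "\<lambda>T. {M. matching E T M}"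
  let ?U = "{u \<in> T - {v}. E v u}"
  have fin: "\<And>T. finite T \<Longrightarrow> finite (?mt T)" by (rule finite_mt)
  have split: "?mt T = {M \<in> ?mt T. v \<notin> \<Union>M} \<union> {M \<in> ?mt T. v \<in> \<Union>M}" by auto
  have A: "{M \<in> ?mt T. v \<notin> \<Union>M} = ?mt (T - {v})"
  proof (intro equalityI subsetI)
    fix M assume "M \<in> {M \<in> ?mt T. v \<notin> \<Union>M}"
    then have "matching E T M" "\<Union>M \<subseteq> T - {v}" using matching_sub[of E T M] by auto
    then show "M \<in> ?mt (T - {v})" using matching_mono_iff[of "T - {v}" T E M] by auto
  next
    fix M assume "M \<in> ?mt (T - {v})"
    then show "M \<in> {M \<in> ?mt T. v \<notin> \<Union>M}" using matching_mono_iff[of "T - {v}" T E M] by auto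
  qed
  have "eta E w w1 T = (\<Sum>M\<in>?mt T. ?P M T)" by (rule eta_closed[where E=E, OF irr fT])
  also have "\<dots> = (\<Sum>M\<in>{M \<in> ?mt T. v \<notin> \<Union>M}. ?P M T) + (\<Sum>M\<in>{M \<in> ?mt T. v \<in> \<Union>M}. ?P M T)"
    by (subst split, rule sum.union_disjoint) (use fin[OF fT] in auto)
  also have "(\<Sum>M\<in>{M \<in> ?mt T. v \<notin> \<Union>M}. ?P M T) = [:- w1 v, 1:] * eta E w w1 (T - {v})"
  proof -
    have "(\<Sum>M\<in>?mt (T - {v}). ?P M T) = (\<Sum>M\<in>?mt (T - {v}). [:- w1 v, 1:] * ?P M (T - {v}))"
    proof (rule sum.cong[OF refl])
      fix M assume "M \<in> ?mt (T - {v})"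
      then have "\<Union>M \<subseteq> T - {v}" by (simp add: matching_sub)
      then have "v \<in> T - \<Union>M" using vT by auto
      then have "(\<Prod>x\<in>T - \<Union>M. [:- w1 x, 1:]) = [:- w1 v, 1:] * (\<Prod>x\<in>T - \<Union>M - {v}. [:- w1 x, 1:])"
        using fT by (intro prod.remove) auto
      moreover have "T - \<Union>M - {v} = T - {v} - \<Union>M" by auto
      ultimately show "?P M T = [:- w1 v, 1:] * ?P M (T - {v})" by (simp add: mult_smult_right)
    qed
    also have "\<dots> = [:- w1 v, 1:] * eta E w w1 (T - {v})"
      using eta_closed[where E=E, OF irr, of "T - {v}" w w1] fT by (simp add: sum_distrib_left)
    finally show ?thesis unfolding A .
  qed
  also have "(\<Sum>M\<in>{M \<in> ?mt T. v \<in> \<Union>M}. ?P M T) =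
     - (\<Sum>u\<in>?U. [:(cmod (w {v, u}))\<^sup>2:] * eta E w w1 (T - {v} - {u}))"
  proof -
    let ?h = "\<lambda>(u, M'). insert {v, u} M'"
    let ?Sig = "Sigma ?U (\<lambda>u. ?mt (T - {v} - {u}))"
    have inj: "inj_on ?h ?Sig"
    proof (rule inj_onI)
      fix p q assume pq: "p \<in> ?Sig" "q \<in> ?Sig" "?h p = ?h q"
      obtain u M' where p: "p = (u, M')" by fastforce
      obtain u' M'' where q: "q = (u', M'')" by fastforce
      have a: "(u, M') \<in> ?Sig" "(u', M'') \<in> ?Sig" "insert {v, u} M' = insert {v, u'} M''"
        using pq p q by auto
      have s1: "\<Union>M' \<subseteq> T - {v} - {u}" using a(1) matching_sub[of E "T - {v} - {u}" M'] by simp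
      have s2: "\<Union>M'' \<subseteq> T - {v} - {u'}" using a(2) matching_sub[of E "T - {v} - {u'}" M''] by simp
      have n1: "{v, u} \<notin> M'" using s1 by blast
      have n2: "{v, u'} \<notin> M''" using s2 by blast
      have "{v, u} \<in> insert {v, u'} M''" using a(3) by blast
      moreover have "{v, u} \<notin> M''" using s2 by blast
      ultimately have "{v, u} = {v, u'}" by blast
      moreover have "u \<noteq> v" "u' \<noteq> v" using a by auto
      ultimately have uu: "u = u'" by (metis doubleton_eq_iff)
      have "M' = insert {v, u} M' - {{v, u}}" using n1 by simp
      also have "\<dots> = insert {v, u'} M'' - {{v, u'}}" using a(3) uu by simp
      also have "\<dots> = M''" using n2 by simp
      finally show "p = q" using uu p q by simp
    qed
    have img: "{M \<in> ?mt T. v \<in> \<Union>M} = ?h ` ?Sig"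
    proof (intro equalityI subsetI)
      fix M assume "M \<in> {M \<in> ?mt T. v \<in> \<Union>M}"
      then have m: "matching E T M" and "v \<in> \<Union>M" by auto
      then obtain e where e: "e \<in> M" "v \<in> e" by blast
      obtain a b where ab: "e = {a, b}" "a \<in> T" "b \<in> T" "E a b" using matching_edge[OF m e(1)] by blast
      define u where "u = (if a = v then b else a)"
      have eu: "e = {v, u}" using ab e(2) by (auto simp: u_def)
      have Evu: "E v u" using ab e(2) sym by (auto simp: u_def)
      have uv: "u \<noteq> v" using Evu irr by auto
      have uT: "u \<in> T" using ab by (auto simp: u_def)
      have m': "matching E (T - {v} - {u}) (M - {e})"
      proof (rule matchingI)
        fix e' assume e': "e' \<in> M - {e}"
        then obtain a' b' where ab': "e' = {a', b'}" "a' \<in> T" "b' \<in> T" "E a' b'"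
          using matching_edge[OF m] by blast
        have "e' \<inter> e = {}" using matching_disj[OF m] e' e by auto
        then show "\<exists>u' v'. e' = {u', v'} \<and> u' \<in> T - {v} - {u} \<and> v' \<in> T - {v} - {u} \<and> E u' v'"
          using ab' eu by auto
      next
        fix e1 e2 assume "e1 \<in> M - {e}" "e2 \<in> M - {e}" "e1 \<noteq> e2"
        then show "e1 \<inter> e2 = {}" using matching_disj[OF m] by auto
      qed
      have "M = ?h (u, M - {e})" using e eu by auto
      moreover have "(u, M - {e}) \<in> ?Sig" using m' uT uv Evu by auto
      ultimately show "M \<in> ?h ` ?Sig" by blast
    next
      fix M assume "M \<in> ?h ` ?Sig"
      then obtain u M' where u: "u \<in> ?U" and m': "matching E (T - {v} - {u}) M'" and M: "M = insert {v, u} M'"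
        by auto
      have s: "\<Union>M' \<subseteq> T - {v} - {u}" using matching_sub[OF m'] .
      have "matching E T M"
        unfolding M
      proof (rule matchingI)
        fix e assume "e \<in> insert {v, u} M'"
        then show "\<exists>a b. e = {a, b} \<and> a \<in> T \<and> b \<in> T \<and> E a b"
        proof
          assume "e = {v, u}" then show ?thesis using u vT by auto
        next
          assume "e \<in> M'"
          then obtain a b where "e = {a, b}" "a \<in> T - {v} - {u}" "b \<in> T - {v} - {u}" "E a b"
            using matching_edge[OF m'] by blast
          then show ?thesis by blast
        qed
      next
        fix e1 e2 assume e12: "e1 \<in> insert {v, u} M'" "e2 \<in> insert {v, u} M'" "e1 \<noteq> e2"
        have d: "\<And>e. e \<in> M' \<Longrightarrow> e \<inter> {v, u} = {}" using s by blast
        show "e1 \<inter> e2 = {}"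
          using e12 d[of e1] d[of e2] matching_disj[OF m', of e1 e2] by auto
      qed
      moreover have "v \<in> \<Union>M" unfolding M by blast
      ultimately show "M \<in> {M \<in> ?mt T. v \<in> \<Union>M}" by simp
    qed
    have finU: "finite ?U" using fT by simp
    have "(\<Sum>M\<in>{M \<in> ?mt T. v \<in> \<Union>M}. ?P M T) = (\<Sum>p\<in>?Sig. ?P (?h p) T)"
      unfolding img sum.reindex[OF inj] by (simp add: o_def)
    also have "\<dots> = (\<Sum>(u, M')\<in>?Sig. ?P (insert {v, u} M') T)"
      by (intro sum.cong refl) (auto split: prod.splits)
    also have "\<dots> = (\<Sum>u\<in>?U. \<Sum>M'\<in>?mt (T - {v} - {u}). ?P (insert {v, u} M') T)"
      using finU fT by (intro sum.Sigma[symmetric]) (auto intro!: fin)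
    also have "\<dots> = (\<Sum>u\<in>?U. - ([:(cmod (w {v, u}))\<^sup>2:] * eta E w w1 (T - {v} - {u})))"
    proof (rule sum.cong[OF refl])
      fix u assume u: "u \<in> ?U"
      have "(\<Sum>M'\<in>?mt (T - {v} - {u}). ?P (insert {v, u} M') T) =
          (\<Sum>M'\<in>?mt (T - {v} - {u}). - ([:(cmod (w {v, u}))\<^sup>2:] * ?P M' (T - {v} - {u})))"
      proof (rule sum.cong[OF refl])
        fix M' assume "M' \<in> ?mt (T - {v} - {u})"
        then have m': "matching E (T - {v} - {u}) M'" by simp
        have s: "\<Union>M' \<subseteq> T - {v} - {u}" using matching_sub[OF m'] .
        have fM: "finite M'" using matching_Pow[OF m'] fT by (meson finite_Diff finite_Pow_iff finite_subset)
        have n: "{v, u} \<notin> M'" using s by blast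
        have "T - \<Union>(insert {v, u} M') = T - {v} - {u} - \<Union>M'" by auto
        then show "?P (insert {v, u} M') T = - ([:(cmod (w {v, u}))\<^sup>2:] * ?P M' (T - {v} - {u}))"
          by (simp add: mw_insert[OF fM n] mult.commute)
      qed
      also have "\<dots> = - ([:(cmod (w {v, u}))\<^sup>2:] * eta E w w1 (T - {v} - {u}))"
        using eta_closed[where E=E, OF irr, of "T - {v} - {u}" w w1] fT
        by (simp add: sum_distrib_left sum_negf)
      finally show "(\<Sum>M'\<in>?mt (T - {v} - {u}). ?P (insert {v, u} M') T) = - ([:(cmod (w {v, u}))\<^sup>2:] * eta E w w1 (T - {v} - {u}))" .
    qed
    finally show ?thesis by (simp add: sum_negf)
  qed
  finally show ?thesis by simp
qed


interpretation ofr: map_poly_comm_ring_hom "of_real :: real \<Rightarrow> complex" ..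

abbreviation etac :: "(nat \<Rightarrow> nat \<Rightarrow> bool) \<Rightarrow> (nat set \<Rightarrow> complex) \<Rightarrow> (nat \<Rightarrow> real) \<Rightarrow> nat set \<Rightarrow> complex poly" where
  "etac E w w1 T \<equiv> map_poly complex_of_real (eta E w w1 T)"

lemma etac_rec:
  assumes sym: "\<forall>u v. E u v \<longrightarrow> E v u" and irr: "\<forall>u. \<not> E u u"
    and fT: "finite T" and vT: "v \<in> T"
  shows "etac E w w1 T = [:- complex_of_real (w1 v), 1:] * etac E w w1 (T - {v}) -
     (\<Sum>u\<in>{u \<in> T - {v}. E v u}. [:complex_of_real ((cmod (w {v, u}))\<^sup>2):] * etac E w w1 (T - {v} - {u}))"
  unfolding eta_rec[OF sym irr fT vT]
  by (simp add: hom_distribs)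


definition Fam :: "(nat \<Rightarrow> nat \<Rightarrow> bool) \<Rightarrow> nat set \<Rightarrow> nat set set set set" where
  "Fam E W = {C. finite C \<and> (\<forall>K\<in>C. is_cycle E K \<and> \<Union>K \<subseteq> W) \<and>
      (\<forall>K1\<in>C. \<forall>K2\<in>C. K1 \<noteq> K2 \<longrightarrow> \<Union>K1 \<inter> \<Union>K2 = {})}"

definition w2c :: "(nat \<Rightarrow> nat \<Rightarrow> bool) \<Rightarrow> (nat set \<Rightarrow> complex) \<Rightarrow> (nat \<Rightarrow> real) \<Rightarrow> nat set set \<Rightarrow> complex" where
  "w2c E w w1 K = w2_cycle (wadj E w w1) K"

definition sC :: "(nat \<Rightarrow> nat \<Rightarrow> bool) \<Rightarrow> (nat set \<Rightarrow> complex) \<Rightarrow> (nat \<Rightarrow> real) \<Rightarrow> nat set set set \<Rightarrow> complex" where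
  "sC E w w1 C = (-1) ^ card C * (\<Prod>K\<in>C. w2c E w w1 K)"

definition XX :: "(nat \<Rightarrow> nat \<Rightarrow> bool) \<Rightarrow> (nat set \<Rightarrow> complex) \<Rightarrow> (nat \<Rightarrow> real) \<Rightarrow> nat set \<Rightarrow> complex poly" where
  "XX E w w1 W = (\<Sum>C\<in>Fam E W. Polynomial.smult (sC E w w1 C) (etac E w w1 (W - \<Union>(\<Union>C))))"

lemma is_cycle_ne: "is_cycle E K \<Longrightarrow> \<Union>K \<noteq> {}"
  unfolding is_cycle_def cycle_list_def
  by (metis Union_cycle_edges length_0_conv not_numeral_le_zero set_empty)

lemma FamI:
  assumes "finite C" "\<And>K. K \<in> C \<Longrightarrow> is_cycle E K" "\<And>K. K \<in> C \<Longrightarrow> \<Union>K \<subseteq> W"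
    "\<And>K1 K2. K1 \<in> C \<Longrightarrow> K2 \<in> C \<Longrightarrow> K1 \<noteq> K2 \<Longrightarrow> \<Union>K1 \<inter> \<Union>K2 = {}"
  shows "C \<in> Fam E W"
  using assms unfolding Fam_def by blast

lemma FamD:
  assumes "C \<in> Fam E W"
  shows "finite C" "\<And>K. K \<in> C \<Longrightarrow> is_cycle E K" "\<And>K. K \<in> C \<Longrightarrow> \<Union>K \<subseteq> W"
    "\<And>K1 K2. K1 \<in> C \<Longrightarrow> K2 \<in> C \<Longrightarrow> K1 \<noteq> K2 \<Longrightarrow> \<Union>K1 \<inter> \<Union>K2 = {}"
  using assms unfolding Fam_def by blast+

lemma finite_Fam: assumes "finite W" shows "finite (Fam E W)"
proof -
  have "Fam E W \<subseteq> Pow (Pow (Pow W))"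
  proof
    fix C assume "C \<in> Fam E W"
    then have "\<And>K. K \<in> C \<Longrightarrow> \<Union>K \<subseteq> W" by (rule FamD)
    then show "C \<in> Pow (Pow (Pow W))" by blast
  qed
  then show ?thesis using assms by (meson finite_Pow_iff finite_subset)
qed

lemma finite_Cy: assumes "finite W" shows "finite {K. P K \<and> \<Union>K \<subseteq> W}"
proof -
  have "{K. P K \<and> \<Union>K \<subseteq> W} \<subseteq> Pow (Pow W)" by blast
  then show ?thesis using assms by (meson finite_Pow_iff finite_subset)
qed

lemma Fam_remove: assumes "v \<in> W" shows "{C \<in> Fam E W. v \<notin> \<Union>(\<Union>C)} = Fam E (W - {v})"
proof (intro equalityI subsetI)
  fix C assume "C \<in> {C \<in> Fam E W. v \<notin> \<Union>(\<Union>C)}"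
  then have C: "C \<in> Fam E W" "v \<notin> \<Union>(\<Union>C)" by auto
  show "C \<in> Fam E (W - {v})"
  proof (rule FamI)
    show "\<And>K. K \<in> C \<Longrightarrow> \<Union>K \<subseteq> W - {v}" using FamD(3)[OF C(1)] C(2) by blast
  qed (use FamD[OF C(1)] in auto)
next
  fix C assume C: "C \<in> Fam E (W - {v})"
  have "C \<in> Fam E W"
  proof (rule FamI)
    show "\<And>K. K \<in> C \<Longrightarrow> \<Union>K \<subseteq> W" using FamD(3)[OF C] by blast
  qed (use FamD[OF C] in auto)
  moreover have "v \<notin> \<Union>(\<Union>C)" using FamD(3)[OF C] by blast
  ultimately show "C \<in> {C \<in> Fam E W. v \<notin> \<Union>(\<Union>C)}" by simp
qed

lemma XX_rec:
  assumes sym: "\<forall>u v. E u v \<longrightarrow> E v u" and irr: "\<forall>u. \<not> E u u"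
    and fW: "finite W" and vW: "v \<in> W"
  shows "XX E w w1 W = [:- complex_of_real (w1 v), 1:] * XX E w w1 (W - {v})
     - (\<Sum>u\<in>{u \<in> W - {v}. E v u}. [:complex_of_real ((cmod (w {v, u}))\<^sup>2):] * XX E w w1 (W - {v} - {u}))
     - (\<Sum>K\<in>{K. is_cycle E K \<and> v \<in> \<Union>K \<and> \<Union>K \<subseteq> W}. [:w2c E w w1 K:] * XX E w w1 (W - \<Union>K))"
proof -
  let ?g = "\<lambda>C W. Polynomial.smult (sC E w w1 C) (etac E w w1 (W - \<Union>(\<Union>C)))"
  let ?B = "{u \<in> W - {v}. E v u}"
  let ?Cy = "{K. is_cycle E K \<and> v \<in> \<Union>K \<and> \<Union>K \<subseteq> W}"
  let ?cm = "\<lambda>u. [:complex_of_real ((cmod (w {v, u}))\<^sup>2):]"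
  have finF: "\<And>W. finite W \<Longrightarrow> finite (Fam E W)" by (rule finite_Fam)
  have split: "Fam E W = {C \<in> Fam E W. v \<notin> \<Union>(\<Union>C)} \<union> {C \<in> Fam E W. v \<in> \<Union>(\<Union>C)}" by auto
  have "XX E w w1 W = (\<Sum>C\<in>{C \<in> Fam E W. v \<notin> \<Union>(\<Union>C)}. ?g C W) + (\<Sum>C\<in>{C \<in> Fam E W. v \<in> \<Union>(\<Union>C)}. ?g C W)"
    unfolding XX_def by (subst split, rule sum.union_disjoint) (use finF[OF fW] in auto)
  also have "(\<Sum>C\<in>{C \<in> Fam E W. v \<notin> \<Union>(\<Union>C)}. ?g C W) =
      [:- complex_of_real (w1 v), 1:] * XX E w w1 (W - {v}) - (\<Sum>u\<in>?B. ?cm u * XX E w w1 (W - {v} - {u}))"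
  proof -
    have "(\<Sum>C\<in>Fam E (W - {v}). ?g C W) = (\<Sum>C\<in>Fam E (W - {v}).
        [:- complex_of_real (w1 v), 1:] * ?g C (W - {v}) - (\<Sum>u\<in>{u \<in> ?B. u \<notin> \<Union>(\<Union>C)}. ?cm u * ?g C (W - {v} - {u})))"
    proof (rule sum.cong[OF refl])
      fix C assume C: "C \<in> Fam E (W - {v})"
      have VV: "\<Union>(\<Union>C) \<subseteq> W - {v}" using FamD(3)[OF C] by blast
      have vT: "v \<in> W - \<Union>(\<Union>C)" using VV vW by blast
      have fT: "finite (W - \<Union>(\<Union>C))" using fW by simp
      have e1: "W - \<Union>(\<Union>C) - {v} = W - {v} - \<Union>(\<Union>C)" by blast
      have e2: "{u \<in> W - {v} - \<Union>(\<Union>C). E v u} = {u \<in> ?B. u \<notin> \<Union>(\<Union>C)}" by blast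
      have e3: "\<And>u. W - {v} - \<Union>(\<Union>C) - {u} = W - {v} - {u} - \<Union>(\<Union>C)" by blast
      show "?g C W = [:- complex_of_real (w1 v), 1:] * ?g C (W - {v}) - (\<Sum>u\<in>{u \<in> ?B. u \<notin> \<Union>(\<Union>C)}. ?cm u * ?g C (W - {v} - {u}))"
        unfolding etac_rec[OF sym irr fT vT] e1 e2 e3 using fW
        by (simp add: smult_diff_right smult_sum2 mult_smult_right)
    qed
    also have "\<dots> = [:- complex_of_real (w1 v), 1:] * XX E w w1 (W - {v}) -
        (\<Sum>C\<in>Fam E (W - {v}). \<Sum>u\<in>{u \<in> ?B. u \<notin> \<Union>(\<Union>C)}. ?cm u * ?g C (W - {v} - {u}))"
      unfolding XX_def by (simp add: sum_subtractf sum_distrib_left)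
    also have "(\<Sum>C\<in>Fam E (W - {v}). \<Sum>u\<in>{u \<in> ?B. u \<notin> \<Union>(\<Union>C)}. ?cm u * ?g C (W - {v} - {u})) =
        (\<Sum>u\<in>?B. \<Sum>C\<in>{C \<in> Fam E (W - {v}). u \<notin> \<Union>(\<Union>C)}. ?cm u * ?g C (W - {v} - {u}))"
      by (rule sum.swap_restrict) (use fW finF in auto)
    also have "\<dots> = (\<Sum>u\<in>?B. ?cm u * XX E w w1 (W - {v} - {u}))"
    proof (rule sum.cong[OF refl])
      fix u assume u: "u \<in> ?B"
      have "{C \<in> Fam E (W - {v}). u \<notin> \<Union>(\<Union>C)} = Fam E (W - {v} - {u})"
        using Fam_remove[of u "W - {v}" E] u by simp
      then show "(\<Sum>C\<in>{C \<in> Fam E (W - {v}). u \<notin> \<Union>(\<Union>C)}. ?cm u * ?g C (W - {v} - {u})) = ?cm u * XX E w w1 (W - {v} - {u})"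
        unfolding XX_def by (simp add: sum_distrib_left)
    qed
    finally show ?thesis unfolding Fam_remove[OF vW] .
  qed
  also have "(\<Sum>C\<in>{C \<in> Fam E W. v \<in> \<Union>(\<Union>C)}. ?g C W) = - (\<Sum>K\<in>?Cy. [:w2c E w w1 K:] * XX E w w1 (W - \<Union>K))"
  proof -
    let ?h = "\<lambda>(K, C'). insert K C'"
    let ?Sig = "Sigma ?Cy (\<lambda>K. Fam E (W - \<Union>K))"
    have notin: "\<And>K C'. K \<in> ?Cy \<Longrightarrow> C' \<in> Fam E (W - \<Union>K) \<Longrightarrow> K \<notin> C'"
    proof
      fix K C' assume K: "K \<in> ?Cy" and C': "C' \<in> Fam E (W - \<Union>K)" and "K \<in> C'"
      then have "\<Union>K \<subseteq> W - \<Union>K" using FamD(3)[OF C'] by blast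
      then show False using K by blast
    qed
    have inj: "inj_on ?h ?Sig"
    proof (rule inj_onI)
      fix p q assume pq: "p \<in> ?Sig" "q \<in> ?Sig" "?h p = ?h q"
      obtain K C' where p: "p = (K, C')" by fastforce
      obtain K' C'' where q: "q = (K', C'')" by fastforce
      have a: "K \<in> ?Cy" "C' \<in> Fam E (W - \<Union>K)" "K' \<in> ?Cy" "C'' \<in> Fam E (W - \<Union>K')"
        "insert K C' = insert K' C''" using pq p q by auto
      have KK: "K = K'"
      proof (rule ccontr)
        assume "K \<noteq> K'"
        then have "K \<in> C''" using a(5) by blast
        then have "\<Union>K \<subseteq> W - \<Union>K'" using FamD(3)[OF a(4)] by blast
        then show False using a(1,3) by blast
      qed
      have "C' = insert K C' - {K}" using notin[OF a(1,2)] by simp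
      also have "\<dots> = insert K' C'' - {K'}" using a(5) KK by simp
      also have "\<dots> = C''" using notin[OF a(3,4)] by simp
      finally show "p = q" using KK p q by simp
    qed
    have img: "{C \<in> Fam E W. v \<in> \<Union>(\<Union>C)} = ?h ` ?Sig"
    proof (intro equalityI subsetI)
      fix C assume "C \<in> {C \<in> Fam E W. v \<in> \<Union>(\<Union>C)}"
      then have C: "C \<in> Fam E W" and "v \<in> \<Union>(\<Union>C)" by auto
      then obtain K where K: "K \<in> C" "v \<in> \<Union>K" by blast
      have KC: "K \<in> ?Cy" using K FamD[OF C] by auto
      have "C - {K} \<in> Fam E (W - \<Union>K)"
      proof (rule FamI)
        show "\<And>K2. K2 \<in> C - {K} \<Longrightarrow> \<Union>K2 \<subseteq> W - \<Union>K"
          using FamD(3,4)[OF C] K by blast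
      qed (use FamD[OF C] in auto)
      moreover have "C = ?h (K, C - {K})" using K by auto
      ultimately show "C \<in> ?h ` ?Sig" using KC by blast
    next
      fix C assume "C \<in> ?h ` ?Sig"
      then obtain K C' where K: "K \<in> ?Cy" and C': "C' \<in> Fam E (W - \<Union>K)" and C: "C = insert K C'"
        by auto
      have "C \<in> Fam E W" unfolding C
      proof (rule FamI)
        show "finite (insert K C')" using FamD(1)[OF C'] by simp
        show "\<And>K2. K2 \<in> insert K C' \<Longrightarrow> is_cycle E K2" using K FamD(2)[OF C'] by auto
        show "\<And>K2. K2 \<in> insert K C' \<Longrightarrow> \<Union>K2 \<subseteq> W" using K FamD(3)[OF C'] by blast
        fix K1 K2 assume "K1 \<in> insert K C'" "K2 \<in> insert K C'" "K1 \<noteq> K2"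
        moreover have d: "\<And>K2. K2 \<in> C' \<Longrightarrow> \<Union>K \<inter> \<Union>K2 = {}" using FamD(3)[OF C'] by blast
        ultimately show "\<Union>K1 \<inter> \<Union>K2 = {}" using FamD(4)[OF C'] by (metis Int_commute insert_iff)
      qed
      moreover have "v \<in> \<Union>(\<Union>C)" using K C by blast
      ultimately show "C \<in> {C \<in> Fam E W. v \<in> \<Union>(\<Union>C)}" by simp
    qed
    have finCy: "finite ?Cy" using finite_Cy[OF fW, of "\<lambda>K. is_cycle E K \<and> v \<in> \<Union>K"] by simp
    have "(\<Sum>C\<in>{C \<in> Fam E W. v \<in> \<Union>(\<Union>C)}. ?g C W) = (\<Sum>p\<in>?Sig. ?g (?h p) W)"
      unfolding img sum.reindex[OF inj] by (simp add: o_def)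
    also have "\<dots> = (\<Sum>(K, C')\<in>?Sig. ?g (insert K C') W)"
      by (intro sum.cong refl) (auto split: prod.splits)
    also have "\<dots> = (\<Sum>K\<in>?Cy. \<Sum>C'\<in>Fam E (W - \<Union>K). ?g (insert K C') W)"
      using finCy fW by (intro sum.Sigma[symmetric]) (auto intro!: finF)
    also have "\<dots> = (\<Sum>K\<in>?Cy. - ([:w2c E w w1 K:] * XX E w w1 (W - \<Union>K)))"
    proof (rule sum.cong[OF refl])
      fix K assume K: "K \<in> ?Cy"
      have "(\<Sum>C'\<in>Fam E (W - \<Union>K). ?g (insert K C') W) =
          (\<Sum>C'\<in>Fam E (W - \<Union>K). - ([:w2c E w w1 K:] * ?g C' (W - \<Union>K)))"
      proof (rule sum.cong[OF refl])
        fix C' assume C': "C' \<in> Fam E (W - \<Union>K)"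
        have n: "K \<notin> C'" by (rule notin[OF K C'])
        have f: "finite C'" by (rule FamD(1)[OF C'])
        have s: "sC E w w1 (insert K C') = - (w2c E w w1 K * sC E w w1 C')"
          unfolding sC_def using n f by simp
        have "W - \<Union>(\<Union>(insert K C')) = W - \<Union>K - \<Union>(\<Union>C')" by blast
        then show "?g (insert K C') W = - ([:w2c E w w1 K:] * ?g C' (W - \<Union>K))"
          by (simp add: s mult.commute)
      qed
      also have "\<dots> = - ([:w2c E w w1 K:] * XX E w w1 (W - \<Union>K))"
        unfolding XX_def by (simp add: sum_distrib_left sum_negf)
      finally show "(\<Sum>C'\<in>Fam E (W - \<Union>K). ?g (insert K C') W) = - ([:w2c E w w1 K:] * XX E w w1 (W - \<Union>K))" .
    qed
    finally show ?thesis by (simp add: sum_negf)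
  qed
  finally show ?thesis by simp
qed


lemma prod_converse: "(\<Prod>(x, y)\<in>converse Z. g x y) = (\<Prod>(x, y)\<in>Z. g y x)"
proof -
  have e: "converse Z = (\<lambda>(x, y). (y, x)) ` Z" by auto
  have i: "inj_on (\<lambda>(x, y). (y, x)) Z" by (auto simp: inj_on_def)
  show ?thesis unfolding e prod.reindex[OF i] by (simp add: o_def case_prod_beta)
qed

definition FZ :: "(nat \<Rightarrow> nat \<Rightarrow> 'c::comm_ring_1) \<Rightarrow> (nat \<times> nat) set \<Rightarrow> 'c" where
  "FZ b Z = (\<Prod>(x, y)\<in>Z. b x y) + (\<Prod>(x, y)\<in>Z. b y x)"

lemma FZ_converse: "FZ b (converse Z) = FZ b Z"
  unfolding FZ_def prod_converse by simp

lemma w2_list_FZ: "distinct c \<Longrightarrow> w2_list b c = FZ b (darcs c)"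
  unfolding w2_list_cp FZ_def by (simp add: cp_darcs)

lemma rev_ne: assumes "distinct L" "2 \<le> length L" shows "rev L \<noteq> L"
proof
  assume r: "rev L = L"
  have "L \<noteq> []" using assms(2) by (cases L) auto
  then have "rev L ! 0 = L ! (length L - 1)" using rev_nth[of 0 L] by simp
  then have "L ! 0 = L ! (length L - 1)" using r by simp
  moreover have "0 < length L" "length L - Suc 0 < length L" "0 \<noteq> length L - Suc 0" using assms(2) by auto
  ultimately show False using nth_eq_iff_index_eq[OF assms(1)] by (metis One_nat_def)
qed

lemma w2c_eq:
  assumes dc: "distinct (v # L0)" and l2: "2 \<le> length L0"
  shows "w2_cycle b (cycle_edges (v # L0)) = cp b (v # L0) + cp b (v # rev L0)"
proof -
  let ?P = "\<lambda>vs. 3 \<le> length vs \<and> distinct vs \<and> cycle_edges vs = cycle_edges (v # L0)"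
  have ex: "?P (v # L0)" using dc l2 by simp
  define d where "d = (SOME vs. ?P vs)"
  have d: "?P d" unfolding d_def using someI[of ?P, OF ex] .
  have "darcs d = darcs (v # L0) \<or> darcs d = converse (darcs (v # L0))"
    using D3[OF dc l2] d by blast
  then have "FZ b (darcs d) = FZ b (darcs (v # L0))" using FZ_converse by metis
  moreover have "w2_cycle b (cycle_edges (v # L0)) = w2_list b d"
    unfolding w2_cycle_def d_def by simp
  moreover have "cp b (v # L0) + cp b (v # rev L0) = FZ b (darcs (v # L0))"
    using dc by (simp add: cp_darcs darcs_rev FZ_def prod_converse)
  ultimately show ?thesis using w2_list_FZ d by simp
qed

lemma cycle_rotate_head:
  assumes cl: "cycle_list E vs" and v: "v \<in> set vs"
  obtains L where "cycle_list E (v # L)" "cycle_edges (v # L) = cycle_edges vs" "set (v # L) = set vs"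
proof -
  obtain j where j: "j < length vs" "vs ! j = v" using v by (auto simp: in_set_conv_nth)
  let ?r = "rotate j vs"
  have dv: "distinct vs" using cl by (simp add: cycle_list_def)
  have "vs \<noteq> []" using j(1) by (cases vs) auto
  then have "?r ! 0 = v" using j nth_rotate[of 0 vs j] by simp
  moreover have "?r \<noteq> []" using j by auto
  ultimately have r: "?r = v # tl ?r" by (metis hd_Cons_tl hd_conv_nth)
  have "cycle_list E ?r" using cl dv by (simp add: cycle_list_darcs darcs_rotate)
  moreover have "cycle_edges ?r = cycle_edges vs" using dv by (rule cycle_edges_rotate)
  moreover have "set ?r = set vs" by simp
  ultimately show ?thesis using that r by metis
qed

lemma lemmaC:
  fixes f :: "nat set \<Rightarrow> complex poly"
  assumes sym: "\<forall>u v. E u v \<longrightarrow> E v u" and fW: "finite W" and vW: "v \<in> W"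
  shows "(\<Sum>L\<in>{L \<in> dl (W - {v}). 2 \<le> length L}. [:cp (wadj E w w1) (v # L):] * f (W - {v} - set L)) =
    (\<Sum>K\<in>{K. is_cycle E K \<and> v \<in> \<Union>K \<and> \<Union>K \<subseteq> W}. [:w2c E w w1 K:] * f (W - \<Union>K))"
proof -
  let ?b = "wadj E w w1"
  let ?h = "\<lambda>L. [:cp ?b (v # L):] * f (W - {v} - set L)"
  let ?D = "{L \<in> dl (W - {v}). 2 \<le> length L}"
  let ?CL = "{L \<in> ?D. cycle_list E (v # L)}"
  let ?Cy = "{K. is_cycle E K \<and> v \<in> \<Union>K \<and> \<Union>K \<subseteq> W}"
  let ?g = "\<lambda>L. cycle_edges (v # L)"
  have finD: "finite ?D" using finite_dl[of "W - {v}"] fW by (auto intro: finite_subset)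
  have "(\<Sum>L\<in>?D. ?h L) = (\<Sum>L\<in>?CL. ?h L)"
  proof (rule sum.mono_neutral_right[OF finD])
    show "?CL \<subseteq> ?D" by auto
    show "\<forall>L\<in>?D - ?CL. ?h L = 0"
    proof
      fix L assume L: "L \<in> ?D - ?CL"
      then have dc: "distinct (v # L)" and l: "3 \<le> length (v # L)" by (auto simp: dl_def)
      then obtain x y where xy: "(x, y) \<in> darcs (v # L)" "\<not> E x y"
        using L by (auto simp: cycle_list_darcs)
      have "x \<noteq> y" using darcs_irrefl[OF dc _ xy(1)] l by simp
      then have z0: "?b x y = 0" using xy(2) by (simp add: wadj_def)
      have "cp ?b (v # L) = 0" unfolding cp_darcs[OF dc]
        by (intro prod_zero finite_darcs bexI[of _ "(x, y)"]) (auto simp: z0 xy(1))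
      then show "?h L = 0" by simp
    qed
  qed
  also have "\<dots> = (\<Sum>K\<in>?g ` ?CL. \<Sum>L\<in>{L \<in> ?CL. ?g L = K}. ?h L)"
    by (rule sum.image_gen) (rule finite_subset[OF _ finD], auto)
  also have "?g ` ?CL = ?Cy"
  proof (intro equalityI subsetI)
    fix K assume "K \<in> ?g ` ?CL"
    then obtain L where L: "L \<in> ?CL" "K = ?g L" by blast
    then have "is_cycle E K" unfolding is_cycle_def by blast
    moreover have "\<Union>K = set (v # L)" using L Union_cycle_edges[of "v # L"] by simp
    ultimately show "K \<in> ?Cy" using L vW by (auto simp: dl_def)
  next
    fix K assume K: "K \<in> ?Cy"
    then obtain vs where vs: "cycle_list E vs" "K = cycle_edges vs" unfolding is_cycle_def by blast
    have "vs \<noteq> []" using vs(1) by (auto simp: cycle_list_def)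
    then have UK: "\<Union>K = set vs" using vs Union_cycle_edges by simp
    moreover have "v \<in> \<Union>K" using K by blast
    ultimately have "v \<in> set vs" by simp
    from cycle_rotate_head[OF vs(1) this] obtain L where
      L: "cycle_list E (v # L)" "cycle_edges (v # L) = cycle_edges vs" "set (v # L) = set vs" .
    have "L \<in> ?CL" using L UK K by (auto simp: dl_def cycle_list_def)
    then show "K \<in> ?g ` ?CL" using L vs by blast
  qed
  also have "(\<Sum>K\<in>?Cy. \<Sum>L\<in>{L \<in> ?CL. ?g L = K}. ?h L) = (\<Sum>K\<in>?Cy. [:w2c E w w1 K:] * f (W - \<Union>K))"
  proof (rule sum.cong[OF refl])
    fix K assume K: "K \<in> ?Cy"
    then obtain vs where vs: "cycle_list E vs" "K = cycle_edges vs" unfolding is_cycle_def by blast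
    have "vs \<noteq> []" using vs(1) by (auto simp: cycle_list_def)
    then have UK: "\<Union>K = set vs" using vs Union_cycle_edges by simp
    moreover have "v \<in> \<Union>K" using K by blast
    ultimately have "v \<in> set vs" by simp
    from cycle_rotate_head[OF vs(1) this] obtain L0 where
      L0: "cycle_list E (v # L0)" "cycle_edges (v # L0) = K" "set (v # L0) = \<Union>K"
      using vs UK by metis
    have dc: "distinct (v # L0)" and l2: "2 \<le> length L0" using L0(1) by (auto simp: cycle_list_def)
    have L0CL: "L0 \<in> ?CL" using L0 K by (auto simp: dl_def cycle_list_def)
    have dcr: "distinct (v # rev L0)" using dc by simp
    have revCL: "rev L0 \<in> ?CL"
    proof -
      have "cycle_list E (v # rev L0)"
        using L0(1) sym unfolding cycle_list_darcs darcs_rev by auto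
      then show ?thesis using L0CL by (auto simp: dl_def)
    qed
    have fib: "{L \<in> ?CL. ?g L = K} = {L0, rev L0}"
    proof (intro equalityI subsetI)
      fix L assume L: "L \<in> {L \<in> ?CL. ?g L = K}"
      then have dL: "distinct (v # L)" by (auto simp: dl_def)
      have "cycle_edges (v # L) = cycle_edges (v # L0)" using L L0 by simp
      then have "darcs (v # L) = darcs (v # L0) \<or> darcs (v # L) = converse (darcs (v # L0))"
        using D3[OF dc l2 dL] by blast
      then show "L \<in> {L0, rev L0}"
      proof
        assume "darcs (v # L) = darcs (v # L0)"
        then show ?thesis using darcs_head_eq[OF dc dL] by simp
      next
        assume "darcs (v # L) = converse (darcs (v # L0))"
        then have "darcs (v # L) = darcs (v # rev L0)" by (simp add: darcs_rev)
        then show ?thesis using darcs_head_eq[OF dcr dL] by simp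
      qed
    next
      fix L assume "L \<in> {L0, rev L0}"
      then show "L \<in> {L \<in> ?CL. ?g L = K}" using L0CL revCL L0(2) cycle_edges_rev[of v L0] by auto
    qed
    have ne: "L0 \<noteq> rev L0" using rev_ne[of L0] dc l2 by auto
    have "(\<Sum>L\<in>{L \<in> ?CL. ?g L = K}. ?h L) = ?h L0 + ?h (rev L0)"
      unfolding fib using ne by simp
    also have "\<dots> = [:cp ?b (v # L0) + cp ?b (v # rev L0):] * f (W - {v} - set L0)"
      by (simp add: smult_add_left)
    also have "cp ?b (v # L0) + cp ?b (v # rev L0) = w2c E w w1 K"
      unfolding w2c_def using w2c_eq[OF dc l2, of ?b] L0(2) by simp
    also have "W - {v} - set L0 = W - \<Union>K" using L0(3) by auto
    finally show "(\<Sum>L\<in>{L \<in> ?CL. ?g L = K}. ?h L) = [:w2c E w w1 K:] * f (W - \<Union>K)" .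
  qed
  finally show ?thesis .
qed


lemma wadj_sq:
  assumes sym: "\<forall>u v. E u v \<longrightarrow> E v u" and e: "E v u" and ne: "v \<noteq> u"
  shows "wadj E w w1 v u * wadj E w w1 u v = complex_of_real ((cmod (w {v, u}))\<^sup>2)"
proof -
  have e': "E u v" using sym e by blast
  have c: "{u, v} = {v, u}" by auto
  have z: "w {v, u} * cnj (w {v, u}) = complex_of_real ((cmod (w {v, u}))\<^sup>2)"
    by (rule complex_norm_square[symmetric])
  show ?thesis
  proof (cases "v < u")
    case True
    then show ?thesis using e e' ne z by (simp add: wadj_def c)
  next
    case False
    then show ?thesis using e e' ne z by (simp add: wadj_def c mult.commute)
  qed
qed

lemma eta_empty: assumes irr: "\<forall>u. \<not> E u u" shows "eta E w w1 {} = 1"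
proof -
  have "{M. matching E {} M} = {{}}"
  proof (intro equalityI subsetI)
    fix M assume "M \<in> {M. matching E {} M}"
    then have "M \<subseteq> Pow {}" using matching_Pow[of E "{}" M] by auto
    moreover have "{} \<notin> M" using \<open>M \<in> _\<close> matching_edge[of E "{}" M "{}"] by auto
    ultimately show "M \<in> {{}}" by auto
  next
    fix M :: "nat set set" assume "M \<in> {{}}" then show "M \<in> {M. matching E {} M}" by (simp add: matching_def)
  qed
  then show ?thesis using eta_closed[where E=E, OF irr, of "{}" w w1] by (simp add: mw_def)
qed

lemma Fam_empty: "Fam E {} = {{}}"
proof (intro equalityI subsetI)
  fix C assume C: "C \<in> Fam E {}"
  have "C = {}"
  proof (rule ccontr)
    assume "C \<noteq> {}" then obtain K where "K \<in> C" by blast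
    then show False using FamD(2,3)[OF C] is_cycle_ne by blast
  qed
  then show "C \<in> {{}}" by simp
next
  fix C :: "nat set set set" assume "C \<in> {{}}" then show "C \<in> Fam E {}" by (auto intro: FamI)
qed

lemma XX_empty: assumes irr: "\<forall>u. \<not> E u u" shows "XX E w w1 {} = 1"
  unfolding XX_def Fam_empty using eta_empty[where E=E, OF irr] by (simp add: sC_def)

lemma Dg_XX:
  assumes sym: "\<forall>u v. E u v \<longrightarrow> E v u" and irr: "\<forall>u. \<not> E u u" and fW: "finite W"
  shows "Dg (Am (wadj E w w1) w1) W = XX E w w1 W"
  using fW
proof (induction "card W" arbitrary: W rule: less_induct)
  case less
  let ?a = "Am (wadj E w w1) w1"
  let ?b = "wadj E w w1"
  show ?case
  proof (cases "W = {}")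
    case True then show ?thesis using XX_empty[where E=E, OF irr] by simp
  next
    case False
    then obtain v where vW: "v \<in> W" by blast
    note fW = less.prems
    have IH: "\<And>W'. W' \<subseteq> W \<Longrightarrow> v \<notin> W' \<Longrightarrow> Dg ?a W' = XX E w w1 W'"
    proof -
      fix W' assume "W' \<subseteq> W" "v \<notin> W'"
      then have "W' \<subset> W" using vW by blast
      then have "card W' < card W" using fW by (rule psubset_card_mono[rotated])
      moreover have "finite W'" using \<open>W' \<subset> W\<close> fW finite_subset by blast
      ultimately show "Dg ?a W' = XX E w w1 W'" using less.hyps by blast
    qed
    have "Dg ?a W = [:- complex_of_real (w1 v), 1:] * Dg ?a (W - {v})
       - (\<Sum>u\<in>W - {v}. [:?b v u * ?b u v:] * Dg ?a (W - {v} - {u}))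
       - (\<Sum>L\<in>{L \<in> dl (W - {v}). 2 \<le> length L}. [:cp ?b (v # L):] * Dg ?a (W - {v} - set L))"
      by (rule DR[OF fW vW])
    also have "Dg ?a (W - {v}) = XX E w w1 (W - {v})" by (rule IH) auto
    also have "(\<Sum>u\<in>W - {v}. [:?b v u * ?b u v:] * Dg ?a (W - {v} - {u})) =
        (\<Sum>u\<in>{u \<in> W - {v}. E v u}. [:complex_of_real ((cmod (w {v, u}))\<^sup>2):] * XX E w w1 (W - {v} - {u}))"
    proof (rule sum.mono_neutral_cong_right)
      show "finite (W - {v})" using fW by simp
      show "{u \<in> W - {v}. E v u} \<subseteq> W - {v}" by blast
      show "\<forall>u\<in>W - {v} - {u \<in> W - {v}. E v u}. [:?b v u * ?b u v:] * Dg ?a (W - {v} - {u}) = 0"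
        by (auto simp: wadj_def)
      fix u assume u: "u \<in> {u \<in> W - {v}. E v u}"
      then have "?b v u * ?b u v = complex_of_real ((cmod (w {v, u}))\<^sup>2)"
        using wadj_sq[OF sym] by auto
      moreover have "Dg ?a (W - {v} - {u}) = XX E w w1 (W - {v} - {u})" by (rule IH) auto
      ultimately show "[:?b v u * ?b u v:] * Dg ?a (W - {v} - {u}) =
         [:complex_of_real ((cmod (w {v, u}))\<^sup>2):] * XX E w w1 (W - {v} - {u})" by simp
    qed
    also have "(\<Sum>L\<in>{L \<in> dl (W - {v}). 2 \<le> length L}. [:cp ?b (v # L):] * Dg ?a (W - {v} - set L)) =
        (\<Sum>L\<in>{L \<in> dl (W - {v}). 2 \<le> length L}. [:cp ?b (v # L):] * XX E w w1 (W - {v} - set L))"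
      by (intro sum.cong refl) (simp add: IH Diff_subset[THEN subset_trans])
    also have "\<dots> = (\<Sum>K\<in>{K. is_cycle E K \<and> v \<in> \<Union>K \<and> \<Union>K \<subseteq> W}. [:w2c E w w1 K:] * XX E w w1 (W - \<Union>K))"
      by (rule lemmaC[OF sym fW vW])
    also have "[:- complex_of_real (w1 v), 1:] * XX E w w1 (W - {v}) -
       (\<Sum>u\<in>{u \<in> W - {v}. E v u}. [:complex_of_real ((cmod (w {v, u}))\<^sup>2):] * XX E w w1 (W - {v} - {u})) -
       (\<Sum>K\<in>{K. is_cycle E K \<and> v \<in> \<Union>K \<and> \<Union>K \<subseteq> W}. [:w2c E w w1 K:] * XX E w w1 (W - \<Union>K)) = XX E w w1 W"
      by (rule XX_rec[OF sym irr fW vW, symmetric])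
    finally show ?thesis .
  qed
qed


lemma is_cycle_edge_ne: "is_cycle E K \<Longrightarrow> e \<in> K \<Longrightarrow> e \<noteq> {}"
  unfolding is_cycle_def cycle_edges_def by auto

lemma reach_cycle:
  assumes cl: "cycle_list E vs" and sub: "cycle_edges vs \<subseteq> F" and x: "x \<in> set vs" and u: "u \<in> set vs"
  shows "(\<lambda>a b. {a, b} \<in> F)\<^sup>*\<^sup>* x u"
proof -
  let ?R = "\<lambda>a b. {a, b} \<in> F"
  let ?m = "length vs"
  obtain i where i: "i < ?m" "x = vs ! i" using x by (auto simp: in_set_conv_nth)
  obtain j where j: "j < ?m" "u = vs ! j" using u by (auto simp: in_set_conv_nth)
  have step: "\<And>k. ?R\<^sup>*\<^sup>* x (vs ! ((i + k) mod ?m))"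
  proof -
    fix k show "?R\<^sup>*\<^sup>* x (vs ! ((i + k) mod ?m))"
    proof (induction k)
      case 0 then show ?case using i by simp
    next
      case (Suc k)
      let ?j = "(i + k) mod ?m"
      from i(1) have "0 < ?m" by (rule le_less_trans[OF le0])
      then have jm: "?j < ?m" by simp
      have "{vs ! ?j, vs ! (Suc ?j mod ?m)} \<in> cycle_edges vs" unfolding cycle_edges_def by (rule CollectI, rule exI[of _ ?j]) (simp add: jm)
      then have r1: "?R (vs ! ?j) (vs ! (Suc ?j mod ?m))" using sub by blast
      have eq: "Suc ?j mod ?m = (i + Suc k) mod ?m" by (simp add: mod_Suc_eq)
      have "?R\<^sup>*\<^sup>* x (vs ! (Suc ?j mod ?m))" using Suc.IH r1 by (rule rtranclp.rtrancl_into_rtrancl)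
      then show ?case unfolding eq .
    qed
  qed
  have "(i + (j + ?m - i)) mod ?m = j" using i j by simp
  then show ?thesis using step[of "j + ?m - i"] j by simp
qed

context
  fixes E :: "nat \<Rightarrow> nat \<Rightarrow> bool" and C :: "nat set set set" and W :: "nat set"
  assumes CF: "C \<in> Fam E W"
begin

lemma comp_reach:
  assumes K: "K \<in> C" and x: "x \<in> \<Union>K"
  shows "{u. (\<lambda>a b. {a, b} \<in> \<Union>C)\<^sup>*\<^sup>* x u} = \<Union>K"
proof (intro equalityI subsetI)
  fix u assume "u \<in> {u. (\<lambda>a b. {a, b} \<in> \<Union>C)\<^sup>*\<^sup>* x u}"
  then have r: "(\<lambda>a b. {a, b} \<in> \<Union>C)\<^sup>*\<^sup>* x u" by simp
  show "u \<in> \<Union>K" using r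
  proof (induction rule: rtranclp_induct)
    case base then show ?case using x .
  next
    case (step y z)
    then obtain K' where K': "K' \<in> C" "{y, z} \<in> K'" by blast
    then have "y \<in> \<Union>K'" by blast
    then have "K' = K" using step.IH FamD(4)[OF CF K'(1) K] by blast
    then show ?case using K' by blast
  qed
next
  fix u assume u: "u \<in> \<Union>K"
  obtain vs where vs: "cycle_list E vs" "K = cycle_edges vs" using FamD(2)[OF CF K] unfolding is_cycle_def by blast
  have "vs \<noteq> []" using vs(1) by (auto simp: cycle_list_def)
  then have UK: "\<Union>K = set vs" using vs Union_cycle_edges by simp
  have "cycle_edges vs \<subseteq> \<Union>C" using vs K by blast
  moreover have x': "x \<in> set vs" and u': "u \<in> set vs" using x u UK by auto
  ultimately have "(\<lambda>a b. {a, b} \<in> \<Union>C)\<^sup>*\<^sup>* x u" by (rule reach_cycle[OF vs(1)])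
  then show "u \<in> {u. (\<lambda>a b. {a, b} \<in> \<Union>C)\<^sup>*\<^sup>* x u}" by (simp only: mem_Collect_eq)
qed

lemma components_Fam: "components (\<Union>C) = (\<lambda>K. \<Union>K) ` C"
proof (intro equalityI subsetI)
  fix X assume "X \<in> components (\<Union>C)"
  then obtain x where x: "x \<in> \<Union>(\<Union>C)" "X = {u. (\<lambda>a b. {a, b} \<in> \<Union>C)\<^sup>*\<^sup>* x u}"
    unfolding components_def by blast
  then obtain K where K: "K \<in> C" "x \<in> \<Union>K" by blast
  then have "X = \<Union>K" using comp_reach[OF K] x(2) by simp
  then show "X \<in> (\<lambda>K. \<Union>K) ` C" using K by blast
next
  fix X assume "X \<in> (\<lambda>K. \<Union>K) ` C"
  then obtain K where K: "K \<in> C" "X = \<Union>K" by blast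
  then obtain x where x: "x \<in> \<Union>K" using is_cycle_ne FamD(2)[OF CF] by blast
  then have "X = {u. (\<lambda>a b. {a, b} \<in> \<Union>C)\<^sup>*\<^sup>* x u}" using comp_reach[OF K(1) x] K(2) by simp
  moreover have "x \<in> \<Union>(\<Union>C)" using x K by blast
  ultimately show "X \<in> components (\<Union>C)" unfolding components_def by blast
qed

lemma edges_of_comp: "K \<in> C \<Longrightarrow> {e \<in> \<Union>C. e \<subseteq> \<Union>K} = K"
proof (intro equalityI subsetI)
  fix e assume K: "K \<in> C" and "e \<in> {e \<in> \<Union>C. e \<subseteq> \<Union>K}"
  then obtain K' where K': "K' \<in> C" "e \<in> K'" "e \<subseteq> \<Union>K" by blast
  have "e \<noteq> {}" using is_cycle_edge_ne FamD(2)[OF CF K'(1)] K'(2) by blast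
  moreover have "e \<subseteq> \<Union>K'" using K' by blast
  ultimately have "K' = K" using FamD(4)[OF CF K'(1) K] K' by blast
  then show "e \<in> K" using K' by simp
next
  fix e assume "K \<in> C" "e \<in> K" then show "e \<in> {e \<in> \<Union>C. e \<subseteq> \<Union>K}" by blast
qed

lemma inj_Union_C: "inj_on (\<lambda>K. \<Union>K) C"
proof (rule inj_onI)
  fix K1 K2 assume K: "K1 \<in> C" "K2 \<in> C" "\<Union>K1 = \<Union>K2"
  show "K1 = K2"
  proof (rule ccontr)
    assume "K1 \<noteq> K2"
    then have "\<Union>K1 \<inter> \<Union>K2 = {}" using FamD(4)[OF CF] K by blast
    moreover have "\<Union>K1 \<noteq> {}" using is_cycle_ne[OF FamD(2)[OF CF K(1)]] .
    ultimately show False using K(3) by simp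
  qed
qed

lemma comp_Fam: "comp (\<Union>C) = card C"
  unfolding comp_def components_Fam using card_image[OF inj_Union_C] .

lemma w2_Fam: "w2 E w w1 (\<Union>C) = (\<Prod>K\<in>C. w2c E w w1 K)"
proof -
  have "w2 E w w1 (\<Union>C) = (\<Prod>X\<in>(\<lambda>K. \<Union>K) ` C. w2_cycle (wadj E w w1) {e \<in> \<Union>C. e \<subseteq> X})"
    unfolding w2_def components_Fam ..
  also have "\<dots> = (\<Prod>K\<in>C. w2_cycle (wadj E w w1) {e \<in> \<Union>C. e \<subseteq> \<Union>K})"
    by (simp add: prod.reindex[OF inj_Union_C])
  also have "\<dots> = (\<Prod>K\<in>C. w2c E w w1 K)"
  proof (rule prod.cong[OF refl])
    fix K assume K: "K \<in> C"
    show "w2_cycle (wadj E w w1) {e \<in> \<Union>C. e \<subseteq> \<Union>K} = w2c E w w1 K"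
      unfolding edges_of_comp[OF K] w2c_def ..
  qed
  finally show ?thesis .
qed

lemma C_recover: "C = (\<lambda>X. {e \<in> \<Union>C. e \<subseteq> X}) ` components (\<Union>C)"
  unfolding components_Fam image_image using edges_of_comp by (auto simp: image_iff)

end

lemma inj_Union_Fam: "inj_on Union (Fam E W)"
proof (rule inj_onI)
  fix C1 C2 assume C: "C1 \<in> Fam E W" "C2 \<in> Fam E W" "\<Union>C1 = \<Union>C2"
  then show "C1 = C2" using C_recover[OF C(1)] C_recover[OF C(2)] by metis
qed


lemma sg_sym: "simple_graph n E \<Longrightarrow> \<forall>u v. E u v \<longrightarrow> E v u"
  unfolding simple_graph_def by blast

lemma sg_irr: "simple_graph n E \<Longrightarrow> \<forall>u. \<not> E u u"
  unfolding simple_graph_def by blast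

lemma cycle_in_V:
  assumes sg: "simple_graph n E" and K: "is_cycle E K"
  shows "\<Union>K \<subseteq> {1..n}"
proof -
  obtain vs where vs: "cycle_list E vs" "K = cycle_edges vs" using K unfolding is_cycle_def by blast
  have "vs \<noteq> []" using vs(1) by (auto simp: cycle_list_def)
  then have UK: "\<Union>K = set vs" using vs Union_cycle_edges by simp
  have "set vs \<subseteq> {1..n}"
  proof
    fix x assume "x \<in> set vs"
    then obtain i where i: "i < length vs" "x = vs ! i" by (auto simp: in_set_conv_nth)
    then have "E x (vs ! ((i + 1) mod length vs))" using vs(1) by (simp add: cycle_list_def)
    then show "x \<in> {1..n}" using sg unfolding simple_graph_def by blast
  qed
  then show ?thesis using UK by simp
qed

lemma cs_eq:
  assumes sg: "simple_graph n E"
  shows "cycle_subgraphs E = Union ` (Fam E {1..n} - {{}})"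
proof (intro equalityI subsetI)
  fix F assume "F \<in> cycle_subgraphs E"
  then obtain C where C: "finite C" "C \<noteq> {}" "\<forall>K\<in>C. is_cycle E K"
    "\<forall>K1\<in>C. \<forall>K2\<in>C. K1 \<noteq> K2 \<longrightarrow> \<Union>K1 \<inter> \<Union>K2 = {}" "F = \<Union>C"
    unfolding cycle_subgraphs_def by blast
  have "C \<in> Fam E {1..n}"
  proof (rule FamI)
    show "finite C" by (rule C(1))
    fix K assume K: "K \<in> C"
    show "is_cycle E K" using C(3) K by simp
    then show "\<Union>K \<subseteq> {1..n}" by (rule cycle_in_V[OF sg])
  next
    fix K1 K2 assume "K1 \<in> C" "K2 \<in> C" "K1 \<noteq> K2"
    then show "\<Union>K1 \<inter> \<Union>K2 = {}" using C(4) by simp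
  qed
  then show "F \<in> Union ` (Fam E {1..n} - {{}})" using C by blast
next
  fix F assume "F \<in> Union ` (Fam E {1..n} - {{}})"
  then obtain C where C: "C \<in> Fam E {1..n}" "C \<noteq> {}" "F = \<Union>C" by blast
  have "finite C \<and> C \<noteq> {} \<and> (\<forall>K\<in>C. is_cycle E K) \<and>
       (\<forall>K1\<in>C. \<forall>K2\<in>C. K1 \<noteq> K2 \<longrightarrow> \<Union>K1 \<inter> \<Union>K2 = {}) \<and> F = \<Union>C"
    using C(2,3) FamD(1,2,4)[OF C(1)] by simp
  then show "F \<in> cycle_subgraphs E" unfolding cycle_subgraphs_def mem_Collect_eq by (rule exI)
qed

lemma wadj_herm: "\<forall>u v. E u v \<longrightarrow> E v u \<Longrightarrow> wadj E w w1 y x = cnj (wadj E w w1 x y)"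
  unfolding wadj_def by (auto simp: insert_commute)

lemma w2_list_real:
  assumes sym: "\<forall>u v. E u v \<longrightarrow> E v u"
  shows "w2_list (wadj E w w1) vs \<in> \<real>"
proof -
  let ?b = "wadj E w w1"
  let ?z = "\<Prod>i<length vs. ?b (vs ! i) (vs ! ((i + 1) mod length vs))"
  have "(\<Prod>i<length vs. ?b (vs ! ((i + 1) mod length vs)) (vs ! i)) = cnj ?z"
    unfolding cnj_prod by (rule prod.cong[OF refl], rule wadj_herm[OF sym])
  then have "w2_list ?b vs = ?z + cnj ?z" unfolding w2_list_def by simp
  also have "\<dots> = complex_of_real (2 * Re ?z)" by (rule complex_add_cnj)
  finally show ?thesis by simp
qed

lemma w2_real: "\<forall>u v. E u v \<longrightarrow> E v u \<Longrightarrow> w2 E w w1 F \<in> \<real>"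
  unfolding w2_def w2_cycle_def by (intro prod_in_Reals w2_list_real)

theorem theorem2p8:
  fixes n :: nat and E :: "nat \<Rightarrow> nat \<Rightarrow> bool"
    and w :: "nat set \<Rightarrow> complex" and w1 :: "nat \<Rightarrow> real"
  assumes "simple_graph n E"
    and "\<forall>u v. E u v \<longrightarrow> w {u, v} \<noteq> 0"
  shows "phi n E w w1 =
           map_poly complex_of_real (eta E w w1 {1..n}) +
           (\<Sum>F\<in>cycle_subgraphs E.
              Polynomial.smult ((-1) ^ comp F * w2 E w w1 F)
                (map_poly complex_of_real (eta E w w1 ({1..n} - \<Union>F))))
         \<and> (\<forall>i. coeff (phi n E w w1) i \<in> \<real>)"
proof -
  note sg = assms(1)
  have sym: "\<forall>u v. E u v \<longrightarrow> E v u" by (rule sg_sym[OF sg])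
  have irr: "\<forall>u. \<not> E u u" by (rule sg_irr[OF sg])
  let ?V = "{1..n}"
  let ?G = "\<lambda>F. Polynomial.smult ((-1) ^ comp F * w2 E w w1 F) (map_poly complex_of_real (eta E w w1 (?V - \<Union>F)))"
  have finF: "finite (Fam E ?V)" by (rule finite_Fam) simp
  have e0: "{} \<in> Fam E ?V" by (rule FamI) auto
  have "phi n E w w1 = XX E w w1 ?V"
    unfolding phi_Dg by (rule Dg_XX[OF sym irr]) simp
  also have "\<dots> = Polynomial.smult (sC E w w1 {}) (etac E w w1 (?V - \<Union>(\<Union>{}))) +
      (\<Sum>C\<in>Fam E ?V - {{}}. Polynomial.smult (sC E w w1 C) (etac E w w1 (?V - \<Union>(\<Union>C))))"
    unfolding XX_def by (rule sum.remove[OF finF e0])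
  also have "Polynomial.smult (sC E w w1 {}) (etac E w w1 (?V - \<Union>(\<Union>{}))) = etac E w w1 ?V"
    by (simp add: sC_def)
  also have "(\<Sum>C\<in>Fam E ?V - {{}}. Polynomial.smult (sC E w w1 C) (etac E w w1 (?V - \<Union>(\<Union>C)))) =
      (\<Sum>C\<in>Fam E ?V - {{}}. ?G (\<Union>C))"
  proof (rule sum.cong[OF refl])
    fix C assume "C \<in> Fam E ?V - {{}}"
    then have C: "C \<in> Fam E ?V" by simp
    show "Polynomial.smult (sC E w w1 C) (etac E w w1 (?V - \<Union>(\<Union>C))) = ?G (\<Union>C)"
      unfolding comp_Fam[OF C] w2_Fam[OF C] sC_def ..
  qed
  also have "\<dots> = (\<Sum>F\<in>cycle_subgraphs E. ?G F)"
  proof -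
    have i: "inj_on Union (Fam E ?V - {{}})" using inj_Union_Fam by (rule inj_on_subset) blast
    show ?thesis unfolding cs_eq[OF sg] sum.reindex[OF i] by (simp add: o_def)
  qed
  finally have eq: "phi n E w w1 = etac E w w1 ?V + (\<Sum>F\<in>cycle_subgraphs E. ?G F)" .
  have real: "\<forall>i. coeff (phi n E w w1) i \<in> \<real>"
  proof
    fix i
    have "\<And>F. (-1) ^ comp F * w2 E w w1 F \<in> \<real>" using w2_real[OF sym] by simp
    then show "coeff (phi n E w w1) i \<in> \<real>"
      unfolding eq by (simp add: coeff_sum coeff_map_poly)
  qed
  show ?thesis using eq real by simp
qed


end
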